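(* Let $\sigma$ and $\tau$ be possibly empty connected non-crossing partitions. Then $1[\sigma]1[\tau]$ and $1[\tau]1[\sigma]$ are nc-equivalent, i.e. for every $n\ge0$ the number of partitions of $[n]$ avoiding both $1212$ and $1[\sigma]1[\tau]$ equals the number avoiding both $1212$ and $1[\tau]1[\sigma]$.
   Context: Set partitions are written in canonical sequential form (restricted growth words). Pattern containment means having a subsequence order-isomorphic to the pattern; a partition is non-crossing if it avoids $1212$. Bracket notation: in a word built from letters and bracketed partitions, $[\sigma]$ stands for $\sigma+r$ (add $r$ to every letter), where $r$ is the number of distinct symbols appearing before it (e.g. $1[12]1[1]=12314$; for empty $\sigma$, $1[\sigma]1[\tau]=11[\tau]$). $\alpha[\beta]$ is $\alpha$ followed by $\beta$ shifted by the number of blocks of $\alpha$; a partition is connected if it cannot be written as $\alpha[\beta]$ with $\alpha,\beta$ nonempty. *)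

theory Defs
  imports Main "HOL-Library.Sublist"
begin

text \<open>Set partitions of [n] in canonical sequential form (restricted growth words):
  letters are positive, the first letter is 1, and each letter is at most one more
  than the maximum of the preceding letters.\<close>
definition rgs :: "nat list \<Rightarrow> bool" where
  "rgs w \<longleftrightarrow> (\<forall>i < length w. 1 \<le> w ! i \<and> w ! i \<le> Suc (Max (insert 0 (set (take i w)))))"

definition nblocks :: "nat list \<Rightarrow> nat" where
  "nblocks w = card (set w)"

definition shift :: "nat \<Rightarrow> nat list \<Rightarrow> nat list" where
  "shift r w = map (\<lambda>x. x + r) w"

definition bconcat :: "nat list \<Rightarrow> nat list \<Rightarrow> nat list" where
  "bconcat a b = a @ shift (nblocks a) b"

definition one_br_one_br :: "nat list \<Rightarrow> nat list \<Rightarrow> nat list" where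
  "one_br_one_br s t = [1] @ shift 1 s @ [1] @ shift (1 + nblocks s) t"

definition order_iso :: "nat list \<Rightarrow> nat list \<Rightarrow> bool" where
  "order_iso u v \<longleftrightarrow> length u = length v \<and>
     (\<forall>i < length u. \<forall>j < length u. (u ! i \<le> u ! j) = (v ! i \<le> v ! j))"

definition contains :: "nat list \<Rightarrow> nat list \<Rightarrow> bool" where
  "contains w p \<longleftrightarrow> (\<exists>s. subseq s w \<and> order_iso s p)"

definition avoids :: "nat list \<Rightarrow> nat list \<Rightarrow> bool" where
  "avoids w p \<longleftrightarrow> \<not> contains w p"

definition noncrossing :: "nat list \<Rightarrow> bool" where
  "noncrossing w \<longleftrightarrow> avoids w [1,2,1,2]"

definition connected_part :: "nat list \<Rightarrow> bool" where
  "connected_part w \<longleftrightarrow> w \<noteq> [] \<and>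
     \<not> (\<exists>a b. rgs a \<and> rgs b \<and> a \<noteq> [] \<and> b \<noteq> [] \<and> w = bconcat a b)"

definition nc_count :: "nat list \<Rightarrow> nat \<Rightarrow> nat" where
  "nc_count p n = card {w. rgs w \<and> length w = n \<and> avoids w [1,2,1,2] \<and> avoids w p}"

end

theory Submission
  imports Defs "HOL-Computational_Algebra.Formal_Power_Series"
begin

unbundle fps_syntax


lemma strict_mono_on_le_iff:
  assumes "strict_mono_on A (g::nat\<Rightarrow>nat)" "x \<in> A" "y \<in> A"
  shows "g x \<le> g y \<longleftrightarrow> x \<le> y"
proof
  assume "g x \<le> g y"
  show "x \<le> y"
  proof (rule ccontr)
    assume "\<not> x \<le> y"
    then have "g y < g x" using assms strict_mono_onD[of A g y x] by simp
    then show False using \<open>g x \<le> g y\<close> by simp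
  qed
next
  assume "x \<le> y"
  then show "g x \<le> g y" using assms strict_mono_onD[of A g x y]
    by (cases "x = y") auto
qed

lemma order_iso_map_iff:
  "order_iso s p \<longleftrightarrow> (\<exists>g. strict_mono_on (set p) g \<and> s = map g p)"
proof
  assume "\<exists>g. strict_mono_on (set p) g \<and> s = map g p"
  then obtain g where g: "strict_mono_on (set p) g" "s = map g p" by blast
  show "order_iso s p" unfolding order_iso_def
    using g by (auto simp: strict_mono_on_le_iff)
next
  assume o: "order_iso s p"
  define g where "g v = s ! (SOME i. i < length p \<and> p ! i = v)" for v
  have L: "length s = length p" using o by (simp add: order_iso_def)
  have gi: "g (p ! k) = s ! k" if "k < length p" for k
  proof -
    have ex: "\<exists>i. i < length p \<and> p ! i = p ! k" using that by blast
    define i where "i = (SOME i. i < length p \<and> p ! i = p ! k)"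
    have i: "i < length p" "p ! i = p ! k" using someI_ex[OF ex] by (auto simp: i_def)
    have "s ! i \<le> s ! k" "s ! k \<le> s ! i" using o i that L by (auto simp: order_iso_def)
    thus ?thesis by (simp add: g_def i_def[symmetric])
  qed
  have "s = map g p" using L gi by (simp add: list_eq_iff_nth_eq)
  moreover have "strict_mono_on (set p) g"
  proof (rule strict_mono_onI)
    fix a b assume "a \<in> set p" "b \<in> set p" "a < b"
    then obtain i j where ij: "i < length p" "j < length p" "p ! i = a" "p ! j = b"
      by (auto simp: in_set_conv_nth)
    have "\<not> s ! j \<le> s ! i" using o ij \<open>a < b\<close> L by (auto simp: order_iso_def)
    thus "g a < g b" using gi ij by auto
  qed
  ultimately show "\<exists>g. strict_mono_on (set p) g \<and> s = map g p" by blast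
qed

lemma order_iso_map: "strict_mono_on (set p) g \<Longrightarrow> order_iso (map g p) p"
  by (auto simp: order_iso_map_iff)

lemma order_iso_refl: "order_iso p p"
  by (simp add: order_iso_def)

lemma order_iso_sym: "order_iso s p \<Longrightarrow> order_iso p s"
  by (auto simp: order_iso_def)

lemma order_iso_trans: "order_iso a b \<Longrightarrow> order_iso b c \<Longrightarrow> order_iso a c"
  by (auto simp: order_iso_def)

lemma contains_self: "order_iso s p \<Longrightarrow> contains s p"
  by (auto simp: contains_def)

lemma contains_mono: "subseq x w \<Longrightarrow> contains x p \<Longrightarrow> contains w p"
  by (auto simp: contains_def intro: subseq_order.order_trans)

lemma contains_Nil[simp]: "contains w []"
  by (auto simp: contains_def order_iso_def intro!: exI[of _ "[]"])

lemma subseq_map_inv: "subseq xs (map f ys) \<Longrightarrow> \<exists>zs. xs = map f zs \<and> subseq zs ys"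
  by (metis nths_map subseq_conv_nths)

lemma order_iso_map_left:
  assumes "strict_mono_on A g" "set x \<subseteq> A"
  shows "order_iso (map g x) q \<longleftrightarrow> order_iso x q"
proof -
  have "\<And>i j. i < length x \<Longrightarrow> j < length x \<Longrightarrow> (g (x ! i) \<le> g (x ! j)) = (x ! i \<le> x ! j)"
    using assms by (intro strict_mono_on_le_iff) (auto dest: nth_mem)
  then show ?thesis unfolding order_iso_def by auto
qed

lemma subseq_set: "subseq z w \<Longrightarrow> set z \<subseteq> set w"
  by (induct rule: list_emb.induct) auto

lemma contains_map:
  assumes "strict_mono_on (set w) g"
  shows "contains (map g w) p \<longleftrightarrow> contains w p"
proof
  assume "contains (map g w) p"
  then obtain s where s: "subseq s (map g w)" "order_iso s p" by (auto simp: contains_def)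
  then obtain z where z: "s = map g z" "subseq z w" using subseq_map_inv by blast
  have "set z \<subseteq> set w" using z(2) by (rule subseq_set)
  then have "order_iso z p" using s z order_iso_map_left[OF assms] by simp
  then show "contains w p" using z unfolding contains_def by blast
next
  assume "contains w p"
  then obtain z where z: "subseq z w" "order_iso z p" by (auto simp: contains_def)
  have "set z \<subseteq> set w" using z(1) by (rule subseq_set)
  then have "order_iso (map g z) p" using z order_iso_map_left[OF assms] by simp
  moreover have "subseq (map g z) (map g w)" using z(1) by (rule subseq_map)
  ultimately show "contains (map g w) p" unfolding contains_def by blast
qed

lemma contains_trans: "contains w p \<Longrightarrow> contains p q \<Longrightarrow> contains w q"
proof -
  assume "contains w p" "contains p q"
  then obtain s t where s: "subseq s w" "order_iso s p" and t: "subseq t p" "order_iso t q"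
    by (auto simp: contains_def)
  obtain g where g: "strict_mono_on (set p) g" "s = map g p" using s(2) order_iso_map_iff by blast
  have "set t \<subseteq> set p" using t(1) by (rule subseq_set)
  have "order_iso (map g t) q" using order_iso_map_left[OF g(1) \<open>set t \<subseteq> set p\<close>] t by simp
  moreover have "subseq (map g t) s" using subseq_map[OF t(1), of g] g by simp
  then have "subseq (map g t) w" using s(1) by (rule subseq_order.order_trans)
  ultimately show ?thesis unfolding contains_def by blast
qed



definition mx :: "nat list \<Rightarrow> nat" where "mx w = Max (insert 0 (set w))"

lemma mx_Nil[simp]: "mx [] = 0" by (simp add: mx_def)
lemma mx_Cons[simp]: "mx (x # w) = max x (mx w)"
proof -
  have "insert 0 (set (x#w)) = insert x (insert 0 (set w))" by auto
  then show ?thesis unfolding mx_def by (simp only:) (rule Max_insert, auto)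
qed
lemma mx_set: "set a = set b \<Longrightarrow> mx a = mx b" by (simp add: mx_def)
lemma mx_snoc[simp]: "mx (w @ [x]) = max (mx w) x"
  using mx_set[of "w @ [x]" "x # w"] by (simp add: max.commute)
lemma mx_append[simp]: "mx (a @ b) = max (mx a) (mx b)"
  by (induct b rule: rev_induct) (simp_all add: append_assoc[symmetric] del: append_assoc)
lemma mx_ge: "x \<in> set w \<Longrightarrow> x \<le> mx w"
  by (simp add: mx_def)
lemma mx_in: "w \<noteq> [] \<Longrightarrow> mx w \<in> set w"
proof (induct w)
  case Nil then show ?case by simp
next
  case (Cons x w) then show ?case by (cases w) (auto simp: max_def)
qed
lemma mx_le: "(\<forall>x\<in>set w. x \<le> m) \<Longrightarrow> mx w \<le> m"
  by (induct w) auto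
lemma mx_map_minus: "mx (map (\<lambda>y. y - k) b) = mx b - k"
  by (induct b) (auto simp: max_def)
lemma mx_map_plus: "mx (map (\<lambda>y. y + k) b) = (if b = [] then 0 else mx b + k)"
  by (induct b) (auto simp: max_def)

lemma rgs_Nil[simp]: "rgs []" by (simp add: rgs_def)

lemma rgs_snoc: "rgs (w @ [x]) \<longleftrightarrow> rgs w \<and> 1 \<le> x \<and> x \<le> Suc (mx w)"
proof -
  define C where "C v i \<longleftrightarrow> 1 \<le> v ! i \<and> v ! i \<le> Suc (Max (insert 0 (set (take i v))))" for v i
  have a: "rgs v \<longleftrightarrow> (\<forall>i < length v. C v i)" for v unfolding rgs_def C_def by simp
  have b: "C (w @ [x]) i = C w i" if "i < length w" for i
    using that unfolding C_def by (simp add: nth_append)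
  have c: "C (w @ [x]) (length w) \<longleftrightarrow> 1 \<le> x \<and> x \<le> Suc (mx w)"
    unfolding C_def mx_def by simp
  have "(\<forall>i < length (w @ [x]). C (w @ [x]) i) \<longleftrightarrow> (\<forall>i < length w. C (w @ [x]) i) \<and> C (w @ [x]) (length w)"
    by (auto simp: less_Suc_eq)
  then show ?thesis using a b c by simp
qed

lemma rgs_set: "rgs w \<Longrightarrow> set w = {1..mx w}"
proof (induct w rule: rev_induct)
  case Nil then show ?case by simp
next
  case (snoc x w)
  then have "rgs w" "1 \<le> x" "x \<le> Suc (mx w)" by (auto simp: rgs_snoc)
  then have sw: "set w = {1..mx w}" using snoc(1) by simp
  show ?case
  proof (cases "x \<le> mx w")
    case True
    then have "x \<in> set w" using sw \<open>1 \<le> x\<close> by simp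
    then have "set (w @ [x]) = {1..mx w}" using sw by (simp add: insert_absorb)
    then show ?thesis using True by (simp add: max_def)
  next
    case False
    then have x: "x = Suc (mx w)" using \<open>x \<le> Suc (mx w)\<close> by simp
    have "set (w @ [x]) = insert (Suc (mx w)) {1..mx w}" using sw x by simp
    also have "\<dots> = {1..Suc (mx w)}" by (rule atLeastAtMostSuc_conv[symmetric]) simp
    finally show ?thesis using x by (simp add: max_def)
  qed
qed

lemma rgs_pos: "rgs w \<Longrightarrow> x \<in> set w \<Longrightarrow> 1 \<le> x"
  using rgs_set by fastforce

lemma nblocks_rgs: "rgs w \<Longrightarrow> nblocks w = mx w"
  by (simp add: nblocks_def rgs_set)

lemma rgs_le_nblocks: "rgs w \<Longrightarrow> x \<in> set w \<Longrightarrow> x \<le> nblocks w"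
  by (simp add: nblocks_rgs mx_ge)

lemma rgs_prefix: "rgs (a @ b) \<Longrightarrow> rgs a"
proof (induct b rule: rev_induct)
  case Nil then show ?case by simp
next
  case (snoc x b)
  then show ?case using rgs_snoc[of "a @ b" x] by simp
qed

lemma rgs_hd: "rgs (x # w) \<Longrightarrow> x = 1"
  using rgs_prefix[of "[x]" w] rgs_snoc[of "[]" x] by simp

lemma rgs_split:
  assumes "rgs (a @ b)" "a \<noteq> []" "\<forall>x\<in>set a. \<forall>y\<in>set b. x < y"
  shows "rgs (map (\<lambda>y. y - nblocks a) b) \<and> a @ b = bconcat a (map (\<lambda>y. y - nblocks a) b)"
proof -
  have ra: "rgs a" using assms(1) by (rule rgs_prefix)
  have nb: "nblocks a = mx a" using ra by (rule nblocks_rgs)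
  have ma: "mx a \<in> set a" using assms(2) by (rule mx_in)
  have gt: "\<forall>y\<in>set b. mx a < y" using assms(3) ma by blast
  have "rgs (map (\<lambda>y. y - mx a) b)" using assms(1) gt
  proof (induct b rule: rev_induct)
    case Nil then show ?case by simp
  next
    case (snoc y b)
    have r: "rgs (a @ b)" "1 \<le> y" "y \<le> Suc (max (mx a) (mx b))"
      using snoc(2) rgs_snoc[of "a @ b" y] by (auto simp: append_assoc[symmetric] simp del: append_assoc)
    have "rgs (map (\<lambda>y. y - mx a) b)" using snoc r by auto
    moreover have "mx a < y" using snoc(3) by auto
    moreover have "y - mx a \<le> Suc (mx b - mx a)" using r(3) \<open>mx a < y\<close> by (auto simp: max_def split: if_splits)
    ultimately show ?case by (simp add: rgs_snoc mx_map_minus)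
  qed
  moreover have "map (\<lambda>y. y - mx a + mx a) b = b"
    using gt by (induct b) auto
  ultimately show ?thesis
    by (simp add: nb bconcat_def shift_def comp_def)
qed



lemma iso_hd_last:
  assumes "order_iso s q" "q \<noteq> []" "hd q = last q"
  shows "hd s = last s"
proof -
  have L: "length s = length q" using assms(1) by (simp add: order_iso_def)
  have q0: "q ! 0 = q ! (length q - 1)" using assms(2,3) by (simp add: hd_conv_nth last_conv_nth)
  have "s ! 0 \<le> s ! (length q - 1)" "s ! (length q - 1) \<le> s ! 0"
    using assms(1,2) q0 L unfolding order_iso_def by auto
  then have "s ! 0 = s ! (length s - 1)" using L by simp
  moreover have "s \<noteq> []" using assms(2) L by auto
  ultimately show ?thesis by (simp add: hd_conv_nth last_conv_nth)
qed

lemma iso_1212: "a < (b::nat) \<Longrightarrow> order_iso [a,b,a,b] [1,2,1,2]"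
proof -
  assume ab: "a < b"
  have "strict_mono_on (set [1,2,1,2::nat]) (\<lambda>v. if v = 1 then a else b)"
    using ab by (auto intro!: strict_mono_onI)
  from order_iso_map[OF this] show ?thesis by simp
qed

lemma append_split_c1:
  assumes "xs @ c # ys = as @ bs" "c \<notin> set as"
  shows "\<exists>t. xs = as @ t \<and> bs = t @ c # ys"
proof -
  from assms(1) obtain us where "(xs = as @ us \<and> us @ c # ys = bs) \<or> (xs @ us = as \<and> c # ys = us @ bs)"
    by (auto simp: append_eq_append_conv2)
  then show ?thesis
  proof
    assume "xs = as @ us \<and> us @ c # ys = bs" then show ?thesis by blast
  next
    assume h: "xs @ us = as \<and> c # ys = us @ bs"
    show ?thesis
    proof (cases us)
      case Nil then show ?thesis using h by auto
    next
      case (Cons u us') then have "c \<in> set as" using h by auto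
      then show ?thesis using assms(2) by blast
    qed
  qed
qed

lemma append_split_c2:
  assumes "xs @ c # ys = as @ bs" "c \<notin> set bs"
  shows "\<exists>t. as = xs @ c # t \<and> ys = t @ bs"
proof -
  from assms(1) obtain us where "(xs = as @ us \<and> us @ c # ys = bs) \<or> (xs @ us = as \<and> c # ys = us @ bs)"
    by (auto simp: append_eq_append_conv2)
  then show ?thesis
  proof
    assume "xs = as @ us \<and> us @ c # ys = bs"
    then have "c \<in> set bs" by auto
    then show ?thesis using assms(2) by blast
  next
    assume h: "xs @ us = as \<and> c # ys = us @ bs"
    show ?thesis
    proof (cases us)
      case Nil then have "c \<in> set bs" using h by auto
      then show ?thesis using assms(2) by blast
    next
      case (Cons u us') then show ?thesis using h by auto
    qed
  qed
qed

lemma straddle: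
  assumes "rgs \<tau>" "\<tau> = [] \<or> connected_part \<tau>" "order_iso s \<tau>" "s = x1 @ x2"
    "x1 \<noteq> []" "x2 \<noteq> []" "\<forall>a\<in>set x1. \<forall>b\<in>set x2. a < b"
  shows False
proof -
  obtain g where g: "strict_mono_on (set \<tau>) g" "s = map g \<tau>"
    using assms(3) order_iso_map_iff by blast
  define k where "k = length x1"
  have x1: "x1 = map g (take k \<tau>)" and x2: "x2 = map g (drop k \<tau>)"
    using g(2) assms(4) unfolding k_def
    by (metis append_eq_conv_conj take_map drop_map)+
  have ne: "take k \<tau> \<noteq> []" "drop k \<tau> \<noteq> []" using x1 x2 assms(5,6) by auto
  have sep: "\<forall>a\<in>set (take k \<tau>). \<forall>b\<in>set (drop k \<tau>). a < b"
  proof (intro ballI)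
    fix a b assume a: "a \<in> set (take k \<tau>)" and b: "b \<in> set (drop k \<tau>)"
    have "g a < g b" using assms(7) a b x1 x2 by auto
    moreover have "a \<in> set \<tau>" "b \<in> set \<tau>" using a b by (auto dest: in_set_takeD in_set_dropD)
    ultimately show "a < b" using g(1) strict_mono_on_le_iff[of "set \<tau>" g b a] by auto
  qed
  have r: "rgs (take k \<tau> @ drop k \<tau>)" using assms(1) by simp
  from rgs_split[OF r ne(1) sep] have
    "rgs (map (\<lambda>y. y - nblocks (take k \<tau>)) (drop k \<tau>))"
    "\<tau> = bconcat (take k \<tau>) (map (\<lambda>y. y - nblocks (take k \<tau>)) (drop k \<tau>))" by auto
  moreover have "rgs (take k \<tau>)" using r by (rule rgs_prefix)
  moreover have "\<tau> \<noteq> []" using ne by auto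
  ultimately show False using assms(2) ne unfolding connected_part_def by blast
qed

lemma conn_last:
  assumes "rgs \<sigma>" "avoids \<sigma> [1,2,1,2]" "connected_part \<sigma>"
  shows "\<sigma> \<noteq> [] \<and> hd \<sigma> = 1 \<and> last \<sigma> = 1"
proof -
  have ne: "\<sigma> \<noteq> []" using assms(3) by (simp add: connected_part_def)
  then obtain z zs where sz: "\<sigma> = z # zs" by (cases \<sigma>) auto
  have h1: "hd \<sigma> = 1" using assms(1) sz rgs_hd by auto
  have "last \<sigma> = 1"
  proof (rule ccontr)
    assume nl: "last \<sigma> \<noteq> 1"
    have "1 \<in> set \<sigma>" using h1 ne by (metis hd_in_set)
    then obtain ys zs where sp: "\<sigma> = ys @ 1 # zs" "1 \<notin> set zs" by (metis split_list_last)
    have zne: "zs \<noteq> []" using nl sp by auto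
    have r1: "rgs (ys @ [1])" using assms(1) sp rgs_prefix[of "ys @ [1]" zs] by simp
    have sep: "\<forall>x\<in>set (ys @ [1]). \<forall>y\<in>set zs. x < y"
    proof (intro ballI, rule ccontr)
      fix x y assume x: "x \<in> set (ys @ [1])" and y: "y \<in> set zs" and nxy: "\<not> x < y"
      have "1 \<le> y" using rgs_pos[OF assms(1)] y sp by auto
      then have y2: "2 \<le> y" using y sp(2) by (cases "y = 1") auto
      have "x \<le> mx (ys @ [1])" using x by (rule mx_ge)
      then have "y \<in> set (ys @ [1])" using rgs_set[OF r1] nxy \<open>1 \<le> y\<close> by auto
      then have yys: "y \<in> set ys" using y2 by auto
      then obtain ys' where ys: "ys = 1 # ys'" using sz sp h1 by (cases ys) auto
      have "y \<in> set ys'" using yys ys y2 by auto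
      then have "subseq [y] ys'" by (simp add: subseq_singleton_left)
      moreover have "subseq [1, y] (1 # zs)" using y by (simp add: subseq_singleton_left)
      ultimately have "subseq ([y] @ [1, y]) (ys' @ 1 # zs)" by (rule list_emb_append_mono)
      then have "subseq [1, y, 1, y] \<sigma>" using sp ys by simp
      moreover have "order_iso [1, y, 1, y] [1,2,1,2]" using y2 by (intro iso_1212) simp
      ultimately have "contains \<sigma> [1,2,1,2]" unfolding contains_def by blast
      then show False using assms(2) by (simp add: avoids_def)
    qed
    have r: "rgs ((ys @ [1]) @ zs)" using assms(1) sp by simp
    from rgs_split[OF r _ sep] have
      "rgs (map (\<lambda>y. y - nblocks (ys @ [1])) zs)"
      "\<sigma> = bconcat (ys @ [1]) (map (\<lambda>y. y - nblocks (ys @ [1])) zs)" using sp by auto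
    then show False using assms(3) r1 zne unfolding connected_part_def by blast
  qed
  then show ?thesis using ne h1 by simp
qed

lemma p_eq: "one_br_one_br \<sigma> \<tau> = 1 # map (\<lambda>x. x + 1) \<sigma> @ 1 # map (\<lambda>x. x + (1 + nblocks \<sigma>)) \<tau>"
  by (simp add: one_br_one_br_def shift_def)

lemma iso_dest:
  assumes "order_iso s (one_br_one_br \<sigma> \<tau>)" "rgs \<sigma>" "rgs \<tau>"
  shows "\<exists>c s1 s2. s = c # s1 @ c # s2 \<and> order_iso s1 \<sigma> \<and> order_iso s2 \<tau> \<and>
     (\<forall>y\<in>set s1. c < y) \<and> (\<forall>y\<in>set s2. c < y) \<and> (\<forall>y\<in>set s1. \<forall>z\<in>set s2. y < z)"
proof -
  let ?p = "one_br_one_br \<sigma> \<tau>"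
  let ?k = "1 + nblocks \<sigma>"
  obtain g where g: "strict_mono_on (set ?p) g" "s = map g ?p"
    using assms(1) order_iso_map_iff by blast
  have inp: "1 \<in> set ?p" "\<And>x. x \<in> set \<sigma> \<Longrightarrow> x + 1 \<in> set ?p"
    "\<And>x. x \<in> set \<tau> \<Longrightarrow> x + ?k \<in> set ?p" by (auto simp: p_eq)
  have lt: "g a < g b" if "a \<in> set ?p" "b \<in> set ?p" "a < b" for a b
    using g(1) that by (simp add: strict_mono_onD)
  define s1 where "s1 = map (\<lambda>x. g (x + 1)) \<sigma>"
  define s2 where "s2 = map (\<lambda>x. g (x + ?k)) \<tau>"
  have "s = g 1 # s1 @ g 1 # s2" using g(2) by (simp add: p_eq s1_def s2_def comp_def)
  moreover have "order_iso s1 \<sigma>" unfolding s1_def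
    by (rule order_iso_map, rule strict_mono_onI, rule lt) (auto simp: p_eq)
  moreover have "order_iso s2 \<tau>" unfolding s2_def
    by (rule order_iso_map, rule strict_mono_onI, rule lt) (auto simp: p_eq)
  moreover have "\<forall>y\<in>set s1. g 1 < y" unfolding s1_def
    using rgs_pos[OF assms(2)] by (auto intro!: lt simp: p_eq Suc_le_eq)
  moreover have "\<forall>y\<in>set s2. g 1 < y" unfolding s2_def
    using rgs_pos[OF assms(3)] by (auto intro!: lt simp: p_eq Suc_le_eq)
  moreover have "\<forall>y\<in>set s1. \<forall>z\<in>set s2. y < z"
  proof (intro ballI)
    fix y z assume "y \<in> set s1" "z \<in> set s2"
    then obtain x t where x: "x \<in> set \<sigma>" "y = g (x + 1)" and t: "t \<in> set \<tau>" "z = g (t + ?k)"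
      unfolding s1_def s2_def by auto
    have "x \<le> nblocks \<sigma>" using rgs_le_nblocks[OF assms(2) x(1)] .
    moreover have "1 \<le> t" using rgs_pos[OF assms(3) t(1)] .
    ultimately have "x + 1 < t + ?k" by simp
    then show "y < z" using lt[OF inp(2)[OF x(1)] inp(3)[OF t(1)]] x t by simp
  qed
  ultimately show ?thesis by blast
qed

lemma iso_build:
  assumes "order_iso s1 \<sigma>" "order_iso s2 \<tau>" "rgs \<sigma>" "rgs \<tau>"
    "\<forall>y\<in>set s1. c < y" "\<forall>y\<in>set s2. c < y" "\<forall>y\<in>set s1. \<forall>z\<in>set s2. y < z"
  shows "order_iso (c # s1 @ c # s2) (one_br_one_br \<sigma> \<tau>)"
proof -
  let ?k = "1 + nblocks \<sigma>"
  obtain g1 where g1: "strict_mono_on (set \<sigma>) g1" "s1 = map g1 \<sigma>"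
    using assms(1) order_iso_map_iff by blast
  obtain g2 where g2: "strict_mono_on (set \<tau>) g2" "s2 = map g2 \<tau>"
    using assms(2) order_iso_map_iff by blast
  define G where "G v = (if v = 1 then c else if v \<le> ?k then g1 (v - 1) else g2 (v - ?k))" for v
  have sb: "\<And>x. x \<in> set \<sigma> \<Longrightarrow> 1 \<le> x \<and> x \<le> nblocks \<sigma>"
    using rgs_pos[OF assms(3)] rgs_le_nblocks[OF assms(3)] by auto
  have tb: "\<And>x. x \<in> set \<tau> \<Longrightarrow> 1 \<le> x" using rgs_pos[OF assms(4)] by auto
  have m1: "map G (map (\<lambda>x. x + 1) \<sigma>) = s1" using g1(2) sb by (auto simp: G_def)
  have m2: "map G (map (\<lambda>x. x + ?k) \<tau>) = s2" using g2(2) tb by (auto simp: G_def)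
  have "map G (one_br_one_br \<sigma> \<tau>) = G 1 # map G (map (\<lambda>x. x + 1) \<sigma>) @ G 1 # map G (map (\<lambda>x. x + ?k) \<tau>)"
    by (simp only: p_eq list.map map_append)
  also have "\<dots> = c # s1 @ c # s2" by (simp only: m1 m2) (simp add: G_def)
  finally have eq: "c # s1 @ c # s2 = map G (one_br_one_br \<sigma> \<tau>)" by simp
  have "strict_mono_on (set (one_br_one_br \<sigma> \<tau>)) G"
  proof (rule strict_mono_onI)
    fix a b assume a: "a \<in> set (one_br_one_br \<sigma> \<tau>)" and b: "b \<in> set (one_br_one_br \<sigma> \<tau>)" and ab: "a < b"
    from a have a': "a = 1 \<or> (\<exists>x\<in>set \<sigma>. a = x + 1) \<or> (\<exists>x\<in>set \<tau>. a = x + ?k)" by (auto simp: p_eq)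
    from b have b': "b = 1 \<or> (\<exists>x\<in>set \<sigma>. b = x + 1) \<or> (\<exists>x\<in>set \<tau>. b = x + ?k)" by (auto simp: p_eq)
    show "G a < G b"
    proof -
      { fix x assume x: "x \<in> set \<sigma>"
        have "G (x + 1) = g1 x" using sb[OF x] by (simp add: G_def)
        moreover have "g1 x \<in> set s1" using g1(2) x by simp
        ultimately have "G (x + 1) = g1 x" "g1 x \<in> set s1" by auto }
      note S = this
      { fix x assume x: "x \<in> set \<tau>"
        have "G (x + ?k) = g2 x" using tb[OF x] by (simp add: G_def)
        moreover have "g2 x \<in> set s2" using g2(2) x by simp
        ultimately have "G (x + ?k) = g2 x" "g2 x \<in> set s2" by auto }
      note T = this
      have G1: "G 1 = c" by (simp add: G_def)
      from a' b' show ?thesis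
      proof (elim disjE bexE)
        assume "a = 1" "b = 1" then show ?thesis using ab by simp
      next
        fix y assume "a = 1" "y \<in> set \<sigma>" "b = y + 1"
        then show ?thesis using S G1 assms(5) by auto
      next
        fix y assume "a = 1" "y \<in> set \<tau>" "b = y + ?k"
        then show ?thesis using T G1 assms(6) by auto
      next
        fix x assume "x \<in> set \<sigma>" "a = x + 1" "b = 1" then show ?thesis using ab by simp
      next
        fix x y assume xy: "x \<in> set \<sigma>" "a = x + 1" "y \<in> set \<sigma>" "b = y + 1"
        then have "g1 x < g1 y" using g1(1) ab by (simp add: strict_mono_onD)
        then show ?thesis using S xy by simp
      next
        fix x y assume xy: "x \<in> set \<sigma>" "a = x + 1" "y \<in> set \<tau>" "b = y + ?k"
        then show ?thesis using S T assms(7) by auto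
      next
        fix x assume "x \<in> set \<tau>" "a = x + ?k" "b = 1" then show ?thesis using ab by simp
      next
        fix x y assume xy: "x \<in> set \<tau>" "a = x + ?k" "y \<in> set \<sigma>" "b = y + 1"
        then show ?thesis using ab sb[of y] tb[of x] by simp
      next
        fix x y assume xy: "x \<in> set \<tau>" "a = x + ?k" "y \<in> set \<tau>" "b = y + ?k"
        then have "g2 x < g2 y" using g2(1) ab by (simp add: strict_mono_onD)
        then show ?thesis using T xy by simp
      qed
    qed
  qed
  then show ?thesis using eq order_iso_map by simp
qed

lemma contains_p_iff:
  assumes "rgs \<sigma>" "rgs \<tau>"
  shows "contains w (one_br_one_br \<sigma> \<tau>) \<longleftrightarrow> (\<exists>c s1 s2. subseq (c # s1 @ c # s2) w \<and>
     order_iso s1 \<sigma> \<and> order_iso s2 \<tau> \<and>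
     (\<forall>y\<in>set s1. c < y) \<and> (\<forall>y\<in>set s2. c < y) \<and> (\<forall>y\<in>set s1. \<forall>z\<in>set s2. y < z))"
proof
  assume "contains w (one_br_one_br \<sigma> \<tau>)"
  then obtain s where "subseq s w" "order_iso s (one_br_one_br \<sigma> \<tau>)" by (auto simp: contains_def)
  then show "\<exists>c s1 s2. subseq (c # s1 @ c # s2) w \<and>
     order_iso s1 \<sigma> \<and> order_iso s2 \<tau> \<and>
     (\<forall>y\<in>set s1. c < y) \<and> (\<forall>y\<in>set s2. c < y) \<and> (\<forall>y\<in>set s1. \<forall>z\<in>set s2. y < z)"
    using iso_dest[OF _ assms] by metis
next
  assume "\<exists>c s1 s2. subseq (c # s1 @ c # s2) w \<and>
     order_iso s1 \<sigma> \<and> order_iso s2 \<tau> \<and>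
     (\<forall>y\<in>set s1. c < y) \<and> (\<forall>y\<in>set s2. c < y) \<and> (\<forall>y\<in>set s1. \<forall>z\<in>set s2. y < z)"
  then obtain c s1 s2 where h: "subseq (c # s1 @ c # s2) w" "order_iso s1 \<sigma>" "order_iso s2 \<tau>"
     "\<forall>y\<in>set s1. c < y" "\<forall>y\<in>set s2. c < y" "\<forall>y\<in>set s1. \<forall>z\<in>set s2. y < z" by blast
  then show "contains w (one_br_one_br \<sigma> \<tau>)"
    using iso_build[OF h(2,3) assms h(4,5,6)] unfolding contains_def by blast
qed



definition fE :: "nat \<Rightarrow> nat \<Rightarrow> nat" where "fE k x = (if x = 1 then 1 else x + k)"
definition E :: "nat list \<Rightarrow> nat list \<Rightarrow> nat list" where
  "E u w = 1 # map (\<lambda>x. x + 1) u @ map (fE (nblocks u)) w"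
definition R :: "nat list \<Rightarrow> nat list" where
  "R w = map (\<lambda>x. x - 1) (filter (\<lambda>x. x \<noteq> 1) w)"

lemma smono_plus: "strict_mono_on A (\<lambda>x::nat. x + k)"
  by (rule strict_mono_onI) simp

lemma contains_plus: "contains (map (\<lambda>x. x + k) w) p \<longleftrightarrow> contains w p"
  by (rule contains_map[OF smono_plus])

lemma smono_fE: "\<forall>x\<in>A. 1 \<le> x \<Longrightarrow> strict_mono_on A (fE k)"
  by (rule strict_mono_onI) (auto simp: fE_def)

lemma contains_fE: "\<forall>x\<in>set w. 1 \<le> x \<Longrightarrow> contains (map (fE k) w) p \<longleftrightarrow> contains w p"
  by (rule contains_map[OF smono_fE])

lemma filter_fE: "\<forall>x\<in>set w. 1 \<le> x \<Longrightarrow>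
   filter (\<lambda>x. x \<noteq> 1) (map (fE k) w) = map (\<lambda>x. x + (k + 1)) (R w)"
  by (induct w) (auto simp: fE_def R_def)

lemma R_pos: "\<forall>x\<in>set w. 1 \<le> x \<Longrightarrow> x \<in> set (R w) \<Longrightarrow> 1 \<le> x"
  by (auto simp: R_def)

lemma filter_Suc: "\<forall>x\<in>set u. 1 \<le> x \<Longrightarrow> filter (\<lambda>x. x \<noteq> Suc 0) (map Suc u) = map Suc u"
  by (induct u) auto

lemma R_E_Nil: "\<forall>x\<in>set u. 1 \<le> x \<Longrightarrow> R (E u []) = u"
  by (simp add: R_def E_def comp_def filter_Suc)

lemma R_E: "\<forall>x\<in>set w. 1 \<le> x \<Longrightarrow> \<forall>x\<in>set u. 1 \<le> x \<Longrightarrow> R (E u w) = bconcat u (R w)"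
proof -
  assume a: "\<forall>x\<in>set w. 1 \<le> x" and a2: "\<forall>x\<in>set u. 1 \<le> x"
  have "R (E u w) = map (\<lambda>x. x - 1) (map (\<lambda>x. x + 1) u @ filter (\<lambda>x. x \<noteq> 1) (map (fE (nblocks u)) w))"
    using a2 by (simp add: R_def E_def comp_def filter_Suc)
  also have "\<dots> = u @ map (\<lambda>x. x + nblocks u) (R w)"
    using filter_fE[OF a, of "nblocks u"] by (simp add: comp_def R_def)
  finally show ?thesis by (simp add: bconcat_def shift_def)
qed

lemma contains_bconcat:
  assumes "rgs a" "\<forall>x\<in>set b. 1 \<le> x" "rgs \<tau>" "\<tau> = [] \<or> connected_part \<tau>"
  shows "contains (bconcat a b) \<tau> \<longleftrightarrow> contains a \<tau> \<or> contains b \<tau>"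
proof
  assume "contains (bconcat a b) \<tau>"
  then obtain s where s: "subseq s (a @ map (\<lambda>x. x + nblocks a) b)" "order_iso s \<tau>"
    by (auto simp: contains_def bconcat_def shift_def)
  then obtain x1 x2 where x: "s = x1 @ x2" "subseq x1 a" "subseq x2 (map (\<lambda>x. x + nblocks a) b)"
    by (auto elim: subseq_appendE)
  show "contains a \<tau> \<or> contains b \<tau>"
  proof (cases "x1 = []")
    case True
    then have "contains (map (\<lambda>x. x + nblocks a) b) \<tau>" using x s unfolding contains_def by auto
    then show ?thesis by (simp add: contains_plus)
  next
    case F1: False
    show ?thesis
    proof (cases "x2 = []")
      case True
      then show ?thesis using x s unfolding contains_def by auto
    next
      case False
      have "\<forall>y\<in>set x1. \<forall>z\<in>set x2. y < z"
      proof (intro ballI)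
        fix y z assume y: "y \<in> set x1" and z: "z \<in> set x2"
        have "y \<le> nblocks a" using rgs_le_nblocks[OF assms(1)] subseq_set[OF x(2)] y by auto
        moreover have "nblocks a < z"
        proof -
          have "z \<in> (\<lambda>x. x + nblocks a) ` set b" using subseq_set[OF x(3)] z by auto
          then show ?thesis using assms(2) by force
        qed
        ultimately show "y < z" by simp
      qed
      then show ?thesis using straddle[OF assms(3,4) s(2) x(1) F1 False] by blast
    qed
  qed
next
  assume "contains a \<tau> \<or> contains b \<tau>"
  then show "contains (bconcat a b) \<tau>"
  proof
    assume "contains a \<tau>"
    then show ?thesis unfolding bconcat_def
      by (rule contains_mono[rotated]) (intro subseq_rev_drop_many subseq_order.order_refl)
  next
    assume "contains b \<tau>"
    then have "contains (shift (nblocks a) b) \<tau>" by (simp add: shift_def contains_plus)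
    then show ?thesis unfolding bconcat_def
      by (rule contains_mono[rotated]) (intro subseq_drop_many subseq_order.order_refl)
  qed
qed

lemma contains_p_sigma: "rgs \<sigma> \<Longrightarrow> contains (one_br_one_br \<sigma> \<tau>) \<sigma>"
proof -
  have "contains (map (\<lambda>x. x + 1) \<sigma>) \<sigma>" by (rule contains_self[OF order_iso_map[OF smono_plus]])
  moreover have "subseq (map (\<lambda>x. x + 1) \<sigma>) (one_br_one_br \<sigma> \<tau>)"
    unfolding p_eq by (intro list_emb_Cons subseq_rev_drop_many subseq_order.order_refl)
  ultimately show "contains (one_br_one_br \<sigma> \<tau>) \<sigma>" by (rule contains_mono[rotated])
qed

lemma contains_p_tau: "contains (one_br_one_br \<sigma> \<tau>) \<tau>"
proof -
  have "contains (map (\<lambda>x. x + (1 + nblocks \<sigma>)) \<tau>) \<tau>" by (rule contains_self[OF order_iso_map[OF smono_plus]])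
  moreover have "subseq (map (\<lambda>x. x + (1 + nblocks \<sigma>)) \<tau>) (one_br_one_br \<sigma> \<tau>)"
    unfolding p_eq by (intro list_emb_Cons subseq_drop_many subseq_order.order_refl)
  ultimately show ?thesis by (rule contains_mono[rotated])
qed



lemma KP0:
  assumes "rgs \<sigma>" "rgs \<tau>" "rgs u"
  shows "contains (E u []) (one_br_one_br \<sigma> \<tau>) \<longleftrightarrow> contains u (one_br_one_br \<sigma> \<tau>)"
proof
  let ?U = "map (\<lambda>x. x + 1) u"
  have U2: "\<forall>y\<in>set ?U. 2 \<le> y" using rgs_pos[OF assms(3)] by auto
  assume "contains (E u []) (one_br_one_br \<sigma> \<tau>)"
  then obtain c s1 s2 where h: "subseq (c # s1 @ c # s2) (1 # ?U)" "order_iso s1 \<sigma>" "order_iso s2 \<tau>"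
     "\<forall>y\<in>set s1. c < y" "\<forall>y\<in>set s2. c < y" "\<forall>y\<in>set s1. \<forall>z\<in>set s2. y < z"
    unfolding contains_p_iff[OF assms(1,2)] E_def by auto
  show "contains u (one_br_one_br \<sigma> \<tau>)"
  proof (cases "c = 1")
    case True
    then have "subseq (s1 @ 1 # s2) ?U" using h(1) by simp
    then have "1 \<in> set ?U" using subseq_set by fastforce
    then show ?thesis using U2 by auto
  next
    case False
    then have "subseq (c # s1 @ c # s2) ?U" using h(1) by simp
    then have "contains ?U (one_br_one_br \<sigma> \<tau>)"
      unfolding contains_p_iff[OF assms(1,2)] using h by blast
    then show ?thesis by (simp only: contains_plus)
  qed
next
  assume "contains u (one_br_one_br \<sigma> \<tau>)"
  then have "contains (map (\<lambda>x. x + 1) u) (one_br_one_br \<sigma> \<tau>)" by (simp only: contains_plus)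
  then show "contains (E u []) (one_br_one_br \<sigma> \<tau>)" unfolding E_def
    by (rule contains_mono[rotated]) (intro list_emb_Cons subseq_rev_drop_many subseq_order.order_refl)
qed

lemma KP:
  assumes s: "rgs \<sigma>" "avoids \<sigma> [1,2,1,2]" "\<sigma> = [] \<or> connected_part \<sigma>"
    and t: "rgs \<tau>" "\<tau> = [] \<or> connected_part \<tau>"
    and u: "rgs u" and w: "rgs w" "w \<noteq> []"
  shows "contains (E u w) (one_br_one_br \<sigma> \<tau>) \<longleftrightarrow>
     contains u (one_br_one_br \<sigma> \<tau>) \<or> contains w (one_br_one_br \<sigma> \<tau>) \<or>
     (contains u \<sigma> \<and> contains (R w) \<tau>)"
proof -
  let ?p = "one_br_one_br \<sigma> \<tau>"
  let ?k = "nblocks u"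
  let ?U = "map (\<lambda>x. x + 1) u"
  let ?W = "map (fE ?k) w"
  have wpos: "\<forall>x\<in>set w. 1 \<le> x" using rgs_pos[OF w(1)] by auto
  have upos: "\<forall>x\<in>set u. 1 \<le> x" using rgs_pos[OF u] by auto
  have FU: "\<forall>y\<in>set ?U. 2 \<le> y \<and> y \<le> ?k + 1"
    using rgs_pos[OF u] rgs_le_nblocks[OF u] by auto
  have FW: "\<forall>y\<in>set ?W. y = 1 \<or> ?k + 2 \<le> y"
    using wpos by (auto simp: fE_def)
  obtain w'' where w'': "w = 1 # w''" using w rgs_hd by (cases w) auto
  define W'' where "W'' = map (fE ?k) w''"
  have W: "?W = 1 # W''" using w'' by (simp add: W''_def fE_def)
  have EE: "E u w = 1 # ?U @ ?W" by (simp add: E_def)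
  have cW: "contains ?W q \<longleftrightarrow> contains w q" for q using contains_fE[OF wpos] .
  have cU: "contains ?U q \<longleftrightarrow> contains u q" for q by (rule contains_plus)
  have fR: "filter (\<lambda>x. x \<noteq> 1) ?W = map (\<lambda>x. x + (?k + 1)) (R w)" using filter_fE[OF wpos] .
  have getT: "contains (R w) \<tau>" if "subseq s2 ?W" "\<forall>y\<in>set s2. 1 < y" "order_iso s2 \<tau>" for s2
  proof -
    have "subseq (filter (\<lambda>x. x \<noteq> 1) s2) (filter (\<lambda>x. x \<noteq> 1) ?W)" using that(1) by (rule subseq_filter)
    moreover have "filter (\<lambda>x. x \<noteq> 1) s2 = s2" using that(2) by (auto intro: filter_True)
    ultimately have "subseq s2 (map (\<lambda>x. x + (?k + 1)) (R w))" using fR by simp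
    then have "contains (map (\<lambda>x. x + (?k + 1)) (R w)) \<tau>" using that(3) unfolding contains_def by blast
    then show ?thesis by (simp only: contains_plus)
  qed
  show ?thesis
  proof
    assume "contains (E u w) ?p"
    then obtain c s1 s2 where h: "subseq (c # s1 @ c # s2) (1 # ?U @ ?W)" "order_iso s1 \<sigma>" "order_iso s2 \<tau>"
       "\<forall>y\<in>set s1. c < y" "\<forall>y\<in>set s2. c < y" "\<forall>y\<in>set s1. \<forall>z\<in>set s2. y < z"
      unfolding contains_p_iff[OF s(1) t(1)] EE by blast
    show "contains u ?p \<or> contains w ?p \<or> (contains u \<sigma> \<and> contains (R w) \<tau>)"
    proof (cases "c = 1")
      case True
      then have "subseq (s1 @ 1 # s2) (?U @ ?W)" using h(1) by simp
      then obtain x1 x2 where x: "s1 @ 1 # s2 = x1 @ x2" "subseq x1 ?U" "subseq x2 ?W"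
        by (auto elim: subseq_appendE)
      have "1 \<notin> set x1" using subseq_set[OF x(2)] FU by auto
      then obtain t where tt: "s1 = x1 @ t" "x2 = t @ 1 # s2" using append_split_c1[OF x(1)] by blast
      show ?thesis
      proof (cases "t = []")
        case True
        then have "contains ?U \<sigma>" using x(2) tt h(2) unfolding contains_def by auto
        then have "contains u \<sigma>" by (simp only: cU)
        moreover have "subseq s2 ?W" using x(3) tt True subseq_Cons' by auto
        then have "contains (R w) \<tau>" using getT h(3,5) \<open>c = 1\<close> by auto
        ultimately show ?thesis by blast
      next
        case tne: False
        show ?thesis
        proof (cases "x1 = []")
          case True
          then have s1t: "s1 = t" using tt by simp
          then obtain a t' where at: "s1 = a # t'" using tne by (cases t) auto
          then have "a \<noteq> 1" using h(4) \<open>c = 1\<close> by auto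
          have "subseq (s1 @ 1 # s2) (1 # W'')" using x(3) tt True W by simp
          then have "subseq (s1 @ 1 # s2) W''" using at \<open>a \<noteq> 1\<close> by simp
          then have "subseq (1 # s1 @ 1 # s2) ?W" using W by simp
          then have "contains ?W ?p"
            unfolding contains_p_iff[OF s(1) t(1)] using h \<open>c = 1\<close> by blast
          then have "contains w ?p" by (simp only: cW) then show ?thesis by blast
        next
          case x1ne: False
          have s1ne: "s1 \<noteq> []" using tt x1ne by simp
          then have "\<sigma> \<noteq> []" using h(2) by (auto simp: order_iso_def)
          then have "connected_part \<sigma>" using s(3) by simp
          then have "hd \<sigma> = last \<sigma>" using conn_last[OF s(1,2)] by simp
          then have hl: "hd s1 = last s1" using iso_hd_last[OF h(2)] \<open>\<sigma> \<noteq> []\<close> by simp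
          have "hd s1 \<in> set x1" using tt x1ne by (cases x1) auto
          then have "hd s1 \<le> ?k + 1" using subseq_set[OF x(2)] FU by auto
          moreover have "last s1 \<in> set t" using tt tne by simp
          then have "last s1 \<in> set ?W" "last s1 \<noteq> 1"
            using subseq_set[OF x(3)] tt h(4) \<open>c = 1\<close> s1ne by auto
          then have "?k + 2 \<le> last s1" using FW by auto
          ultimately show ?thesis using hl by simp
        qed
      qed
    next
      case cne: False
      then have "subseq (c # s1 @ c # s2) (?U @ ?W)" using h(1) by simp
      then obtain x1 x2 where x: "c # s1 @ c # s2 = x1 @ x2" "subseq x1 ?U" "subseq x2 ?W"
        by (auto elim: subseq_appendE)
      show ?thesis
      proof (cases "x1 = []")
        case True
        then have "subseq (c # s1 @ c # s2) ?W" using x by simp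
        then have "contains ?W ?p"
          unfolding contains_p_iff[OF s(1) t(1)] using h(2-6) by blast
        then have "contains w ?p" by (simp only: cW) then show ?thesis by blast
      next
        case False
        then obtain x1' where x1: "x1 = c # x1'" using x(1) by (cases x1) auto
        then have "c \<in> set ?U" using subseq_set[OF x(2)] by auto
        then have c2: "2 \<le> c" "c \<le> ?k + 1" using FU by auto
        have cx2: "c \<notin> set x2"
        proof
          assume "c \<in> set x2"
          then have "c \<in> set ?W" using subseq_set[OF x(3)] by blast
          then have "c = 1 \<or> ?k + 2 \<le> c" using FW by blast
          then show False using c2 by simp
        qed
        have sx: "s1 @ c # s2 = x1' @ x2" using x(1) x1 by simp
        obtain t where tt: "x1' = s1 @ c # t" "s2 = t @ x2"
          using append_split_c2[OF sx cx2] by blast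
        show ?thesis
        proof (cases "x2 = []")
          case True
          then have "subseq (c # s1 @ c # s2) ?U" using x(2) x1 tt by simp
          then have "contains ?U ?p"
            unfolding contains_p_iff[OF s(1) t(1)] using h(2-6) by blast
          then have "contains u ?p" by (simp only: cU) then show ?thesis by blast
        next
          case x2ne: False
          show ?thesis
          proof (cases "t = []")
            case True
            have "subseq s1 (c # (s1 @ (c # t)))"
              by (intro list_emb_Cons subseq_rev_drop_many subseq_order.order_refl)
            then have "subseq s1 x1" using x1 tt by simp
            then have "subseq s1 ?U" using x(2) by (rule subseq_order.order_trans)
            then have "contains ?U \<sigma>" using h(2) unfolding contains_def by blast
            then have "contains u \<sigma>" by (simp only: cU)
            moreover have "subseq s2 ?W" using x(3) tt True by simp
            moreover have "\<forall>y\<in>set s2. 1 < y" using h(5) c2 by auto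
            ultimately have "contains u \<sigma> \<and> contains (R w) \<tau>" using getT h(3) by blast
            then show ?thesis by blast
          next
            case tne: False
            have "\<forall>y\<in>set t. \<forall>z\<in>set x2. y < z"
            proof (intro ballI)
              fix y z assume y: "y \<in> set t" and z: "z \<in> set x2"
              have "y \<in> set ?U" using subseq_set[OF x(2)] x1 tt y by auto
              then have "y \<le> ?k + 1" using FU by auto
              moreover have "z \<in> set ?W" "c < z" using subseq_set[OF x(3)] z h(5) tt by auto
              then have "?k + 2 \<le> z" using FW c2 by auto
              ultimately show "y < z" by simp
            qed
            then show ?thesis using straddle[OF t h(3) tt(2) tne x2ne] by blast
          qed
        qed
      qed
    qed
  next
    assume "contains u ?p \<or> contains w ?p \<or> (contains u \<sigma> \<and> contains (R w) \<tau>)"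
    then show "contains (E u w) ?p"
    proof (elim disjE conjE)
      assume "contains u ?p"
      then have "contains ?U ?p" by (simp only: cU)
      then show ?thesis unfolding EE
        by (rule contains_mono[rotated]) (intro list_emb_Cons subseq_rev_drop_many subseq_order.order_refl)
    next
      assume "contains w ?p"
      then have "contains ?W ?p" by (simp only: cW)
      then show ?thesis unfolding EE
        by (rule contains_mono[rotated]) (intro list_emb_Cons subseq_drop_many subseq_order.order_refl)
    next
      assume cs: "contains u \<sigma>" and ct: "contains (R w) \<tau>"
      obtain s1 where s1: "subseq s1 u" "order_iso s1 \<sigma>" using cs by (auto simp: contains_def)
      obtain s2 where s2: "subseq s2 (R w)" "order_iso s2 \<tau>" using ct by (auto simp: contains_def)
      let ?s1 = "map (\<lambda>x. x + 1) s1"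
      let ?s2 = "map (\<lambda>x. x + (?k + 1)) s2"
      have a1: "subseq ?s1 ?U" using s1(1) by (rule subseq_map)
      have "subseq ?s2 (map (\<lambda>x. x + (?k + 1)) (R w))" using s2(1) by (rule subseq_map)
      then have "subseq ?s2 (filter (\<lambda>x. x \<noteq> 1) W'')" using fR W by simp
      then have a2: "subseq ?s2 W''" using subseq_filter_left subseq_order.order_trans by blast
      have "subseq (?s1 @ 1 # ?s2) (?U @ 1 # W'')" using a1 a2 by (intro list_emb_append_mono) auto
      then have sub: "subseq (1 # ?s1 @ 1 # ?s2) (E u w)" using EE W by simp
      have i1: "order_iso ?s1 \<sigma>" using s1(2) order_iso_map_left[OF smono_plus] by blast
      have i2: "order_iso ?s2 \<tau>" using s2(2) order_iso_map_left[OF smono_plus] by blast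
      have v1: "\<forall>y\<in>set ?s1. 1 < y \<and> y \<le> ?k + 1"
        using subseq_set[OF s1(1)] upos rgs_le_nblocks[OF u] by fastforce
      have v2: "\<forall>y\<in>set ?s2. ?k + 2 \<le> y"
        using subseq_set[OF s2(1)] R_pos[OF wpos] by fastforce
      have "\<forall>y\<in>set ?s1. \<forall>z\<in>set ?s2. y < z" using v1 v2 by fastforce
      moreover have "\<forall>y\<in>set ?s2. 1 < y" using v2 by fastforce
      ultimately show ?thesis
        unfolding contains_p_iff[OF s(1) t(1)] using sub i1 i2 v1 by blast
    qed
  qed
qed



lemma rgs_single: "rgs [1]"
proof -
  have "rgs ([] @ [1])" by (subst rgs_snoc) simp
  then show ?thesis by simp
qed

lemma mx_map_Suc: "mx (map Suc b) = (if b = [] then 0 else Suc (mx b))"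
  by (induct b) (auto simp: max_def)

lemma rgs_E_Nil: "rgs u \<Longrightarrow> rgs (1 # map (\<lambda>x. x + 1) u)"
proof (induct u rule: rev_induct)
  case Nil then show ?case using rgs_single by simp
next
  case (snoc x u)
  have h: "rgs u" "1 \<le> x" "x \<le> Suc (mx u)" using snoc(2) by (auto simp: rgs_snoc)
  have "rgs ((1 # map (\<lambda>x. x + 1) u) @ [x + 1])"
    unfolding rgs_snoc using snoc(1) h by (auto simp: mx_map_Suc)
  then show ?case by simp
qed

lemma mx_map_mono:
  assumes "xs \<noteq> []" "\<forall>a\<in>set xs. \<forall>b\<in>set xs. a \<le> b \<longrightarrow> f a \<le> f b"
  shows "mx (map f xs) = f (mx xs)"
  using assms
proof (induct xs)
  case Nil then show ?case by simp
next
  case (Cons x xs)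
  show ?case
  proof (cases "xs = []")
    case True then show ?thesis by simp
  next
    case False
    then have ih: "mx (map f xs) = f (mx xs)" using Cons by auto
    have m: "mx xs \<in> set xs" using False by (rule mx_in)
    show ?thesis
    proof (cases "x \<le> mx xs")
      case True
      then have "f x \<le> f (mx xs)" using Cons(3) m by auto
      then show ?thesis using ih True by (simp add: max_def)
    next
      case F: False
      then have "f (mx xs) \<le> f x" using Cons(3) m by auto
      then show ?thesis using ih F by (simp add: max_def)
    qed
  qed
qed

lemma rgs_E:
  assumes "rgs u" "rgs w"
  shows "rgs (E u w)"
  using assms(2)
proof (induct w rule: rev_induct)
  case Nil then show ?case using rgs_E_Nil[OF assms(1)] by (simp add: E_def)
next
  case (snoc x w)
  let ?k = "nblocks u"
  let ?A = "1 # map (\<lambda>x. x + 1) u"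
  have h: "rgs w" "1 \<le> x" "x \<le> Suc (mx w)" using snoc(2) by (auto simp: rgs_snoc)
  have r: "rgs (?A @ map (fE ?k) w)" using snoc(1) h by (simp add: E_def)
  have mA: "mx ?A = ?k + 1" using nblocks_rgs[OF assms(1)] by (auto simp: mx_map_Suc)
  have wpos: "\<forall>y\<in>set w. 1 \<le> y" using rgs_pos[OF h(1)] by auto
  have "fE ?k x \<le> Suc (max (mx ?A) (mx (map (fE ?k) w)))"
  proof (cases "x = 1")
    case True then show ?thesis by (simp add: fE_def)
  next
    case False
    show ?thesis
    proof (cases "2 \<le> mx w")
      case True
      then have wne: "w \<noteq> []" by auto
      have "mx (map (fE ?k) w) = fE ?k (mx w)"
        by (rule mx_map_mono[OF wne]) (use wpos in \<open>auto simp: fE_def\<close>)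
      then have "mx (map (fE ?k) w) = mx w + ?k" using True by (simp add: fE_def)
      then show ?thesis using h False by (simp add: fE_def)
    next
      case F2: False
      then have "x = 2" using h False by simp
      then show ?thesis using mA by (simp add: fE_def)
    qed
  qed
  moreover have "1 \<le> fE ?k x" using h by (simp add: fE_def)
  ultimately have "rgs ((?A @ map (fE ?k) w) @ [fE ?k x])"
    unfolding rgs_snoc using r by simp
  then show ?case by (simp add: E_def)
qed

lemma length_E[simp]: "length (E u w) = Suc (length u + length w)"
  by (simp add: E_def)

lemma E_inj:
  assumes "E u w = E u' w'" "rgs u" "rgs u'" "rgs w" "rgs w'"
  shows "u = u' \<and> w = w'"
proof -
  have tw: "takeWhile (\<lambda>x. x \<noteq> 1) (map (fE k) v) = []" if "rgs v" for v k
  proof (cases v)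
    case (Cons a v')
    then have "a = 1" using that rgs_hd by blast
    then show ?thesis using Cons by (simp add: fE_def)
  qed simp
  have tW: "takeWhile (\<lambda>x. x \<noteq> 1) (tl (E u w)) = map (\<lambda>x. x + 1) u"
    if "rgs u" "rgs w" for u w
  proof -
    have a: "\<And>x. x \<in> set (map (\<lambda>x. x + 1) u) \<Longrightarrow> x \<noteq> 1" using rgs_pos[OF that(1)] by auto
    have "takeWhile (\<lambda>x. x \<noteq> 1) (map (\<lambda>x. x + 1) u @ map (fE (nblocks u)) w)
       = map (\<lambda>x. x + 1) u @ takeWhile (\<lambda>x. x \<noteq> 1) (map (fE (nblocks u)) w)"
      by (rule takeWhile_append2) (rule a)
    then show ?thesis using tw[OF that(2)] by (simp add: E_def)
  qed
  have "map (\<lambda>x. x + 1) u = map (\<lambda>x. x + 1) u'"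
    using tW[OF assms(2,4)] tW[OF assms(3,5)] assms(1) by simp
  moreover have "inj (\<lambda>x::nat. x + 1)" by (simp add: inj_def)
  ultimately have uu: "u = u'" by (simp add: inj_map_eq_map)
  then have "map (fE (nblocks u)) w = map (fE (nblocks u)) w'" using assms(1) by (simp add: E_def)
  moreover have "inj_on (fE (nblocks u)) (set w \<union> set w')"
  proof (rule inj_onI)
    fix x y assume x: "x \<in> set w \<union> set w'" and y: "y \<in> set w \<union> set w'"
      and e: "fE (nblocks u) x = fE (nblocks u) y"
    have "1 \<le> x" "1 \<le> y" using x y rgs_pos[OF assms(4)] rgs_pos[OF assms(5)] by auto
    then show "x = y" using e unfolding fE_def by (cases "x = 1"; cases "y = 1") simp_all
  qed
  ultimately have "w = w'" by (simp add: inj_on_map_eq_map)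
  then show ?thesis using uu by simp
qed



lemma iso_1212_dest: "order_iso s [1,2,1,2] \<Longrightarrow> \<exists>a b. s = [a,b,a,b] \<and> a < (b::nat)"
proof -
  assume "order_iso s [1,2,1,2]"
  then obtain g where g: "strict_mono_on (set [1,2,1,2::nat]) g" "s = map g [1,2,1,2]"
    using order_iso_map_iff by blast
  have "g 1 < g 2" using g(1) by (simp add: strict_mono_onD)
  then show ?thesis using g(2) by auto
qed

lemma contains_1212_iff: "contains v [1,2,1,2] \<longleftrightarrow> (\<exists>a b. a < b \<and> subseq [a,b,a,b] v)"
proof
  assume "contains v [1,2,1,2]"
  then obtain s where "subseq s v" "order_iso s [1,2,1,2]" by (auto simp: contains_def)
  then show "\<exists>a b. a < b \<and> subseq [a,b,a,b] v" using iso_1212_dest by blast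
next
  assume "\<exists>a b. a < b \<and> subseq [a,b,a,b] v"
  then obtain a b where "a < b" "subseq [a,b,a,b] v" by blast
  then show "contains v [1,2,1,2]" using iso_1212 unfolding contains_def by blast
qed

lemma ncE:
  assumes u: "rgs u" "avoids u [1,2,1,2]" and w: "rgs w" "avoids w [1,2,1,2]"
  shows "avoids (E u w) [1,2,1,2]"
proof -
  let ?q = "[1,2,1,2::nat]"
  let ?k = "nblocks u"
  let ?U = "map (\<lambda>x. x + 1) u"
  let ?W = "map (fE ?k) w"
  have wpos: "\<forall>x\<in>set w. 1 \<le> x" using rgs_pos[OF w(1)] by auto
  have FU: "\<forall>y\<in>set ?U. 2 \<le> y \<and> y \<le> ?k + 1"
    using rgs_pos[OF u(1)] rgs_le_nblocks[OF u(1)] by auto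
  have FW: "\<forall>y\<in>set ?W. y = 1 \<or> ?k + 2 \<le> y"
    using wpos by (auto simp: fE_def)
  have EE: "E u w = 1 # ?U @ ?W" by (simp add: E_def)
  have cW: "\<not> contains ?W ?q" using contains_fE[OF wpos] w(2) by (simp add: avoids_def)
  have cU: "\<not> contains ?U ?q" using contains_plus[of 1 u ?q] u(2) by (simp only: avoids_def) simp
  have disj: "y \<notin> set ?W" if "y \<in> set ?U" for y
  proof
    assume "y \<in> set ?W"
    then have "y = 1 \<or> ?k + 2 \<le> y" using FW by blast
    then show False using FU that by fastforce
  qed
  show ?thesis unfolding avoids_def
  proof
    assume "contains (E u w) ?q"
    then obtain a b where ab: "a < b" "subseq [a,b,a,b] (1 # ?U @ ?W)"
      unfolding contains_1212_iff EE by blast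
    show False
    proof (cases "a = 1")
      case a1: True
      then have "subseq ([b] @ 1 # [b]) (?U @ ?W)" using ab by simp
      then obtain x1 x2 where x: "[b] @ 1 # [b] = x1 @ x2" "subseq x1 ?U" "subseq x2 ?W"
        by (auto elim: subseq_appendE)
      have "1 \<notin> set x1" using subseq_set[OF x(2)] FU by auto
      then obtain t where tt: "[b] = x1 @ t" "x2 = t @ 1 # [b]" using append_split_c1[OF x(1)] by blast
      show False
      proof (cases "x1 = []")
        case True
        then have "x2 = [b,1,b]" using tt by simp
        then have sb: "subseq [b,1,b] ?W" using x(3) by simp
        then have "w \<noteq> []" by auto
        then obtain w'' where w'': "w = 1 # w''" using w(1) rgs_hd by (cases w) auto
        then have W: "?W = 1 # map (fE ?k) w''" by (simp add: fE_def)
        have "b \<noteq> 1" using ab a1 by simp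
        then have "subseq [b,1,b] (map (fE ?k) w'')" using sb W by simp
        then have "subseq [1,b,1,b] ?W" using W by simp
        then have "contains ?W ?q" unfolding contains_1212_iff using ab a1 by blast
        then show False using cW by simp
      next
        case False
        then have "x1 = [b]" "t = []" using tt by (cases x1; auto)+
        then have "b \<in> set ?U" "b \<in> set ?W" using subseq_set[OF x(2)] subseq_set[OF x(3)] tt by auto
        then show False using disj by blast
      qed
    next
      case an: False
      then have "subseq (a # [b] @ a # [b]) (?U @ ?W)" using ab by simp
      then obtain x1 x2 where x: "a # [b] @ a # [b] = x1 @ x2" "subseq x1 ?U" "subseq x2 ?W"
        by (auto elim: subseq_appendE)
      show False
      proof (cases "x1 = []")
        case True
        then have "contains ?W ?q" unfolding contains_1212_iff using ab x by auto
        then show False using cW by simp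
      next
        case False
        then obtain x1' where x1: "x1 = a # x1'" using x(1) by (cases x1) auto
        then have "a \<in> set ?U" using subseq_set[OF x(2)] by auto
        then have ax2: "a \<notin> set x2" using disj subseq_set[OF x(3)] by blast
        have sx: "[b] @ a # [b] = x1' @ x2" using x(1) x1 by simp
        obtain t where tt: "x1' = [b] @ a # t" "[b] = t @ x2"
          using append_split_c2[OF sx ax2] by blast
        show False
        proof (cases "x2 = []")
          case True
          then have "t = [b]" using tt by simp
          then have "x1 = [a,b,a,b]" using x1 tt by simp
          then have "subseq [a,b,a,b] ?U" using x(2) by simp
          then have "contains ?U ?q" unfolding contains_1212_iff using ab by blast
          then show False using cU by simp
        next
          case False
          then have "x2 = [b]" using tt by (cases t) auto
          then have "b \<in> set ?U" "b \<in> set ?W" using subseq_set[OF x(2)] subseq_set[OF x(3)] x1 tt by auto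
          then show False using disj by blast
        qed
      qed
    qed
  qed
qed



lemma rgs_dec: "rgs (1 # t) \<Longrightarrow> \<forall>x\<in>set t. 2 \<le> x \<Longrightarrow> rgs (map (\<lambda>x. x - 1) t)"
proof (induct t rule: rev_induct)
  case Nil then show ?case by simp
next
  case (snoc x t)
  have h: "rgs (1 # t)" "x \<le> Suc (max 1 (mx t))"
    using snoc(2) rgs_snoc[of "1 # t" x] by auto
  have t2: "\<forall>x\<in>set t. 2 \<le> x" "2 \<le> x" using snoc(3) by auto
  have ih: "rgs (map (\<lambda>x. x - 1) t)" using snoc(1) h t2 by blast
  have "x - 1 \<le> Suc (mx t - 1)"
  proof (cases "t = []")
    case True then show ?thesis using h by simp
  next
    case False
    then have "mx t \<in> set t" by (rule mx_in)
    then have "2 \<le> mx t" using t2 by auto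
    then show ?thesis using h by (simp add: max_def)
  qed
  then show ?case using ih t2 by (simp add: rgs_snoc mx_map_minus)
qed

lemma decomp:
  assumes v: "rgs v" "avoids v [1,2,1,2]" "v \<noteq> []"
  shows "\<exists>u w. rgs u \<and> avoids u [1,2,1,2] \<and> rgs w \<and> avoids w [1,2,1,2] \<and> v = E u w"
proof -
  let ?q = "[1,2,1,2::nat]"
  obtain rest where vr: "v = 1 # rest" using v rgs_hd by (cases v) auto
  define t where "t = takeWhile (\<lambda>x. x \<noteq> 1) rest"
  define d where "d = dropWhile (\<lambda>x. x \<noteq> 1) rest"
  have rtd: "rest = t @ d" by (simp add: t_def d_def)
  have vtd: "v = (1 # t) @ d" using vr rtd by simp
  have vpos: "\<forall>x\<in>set v. 1 \<le> x" using rgs_pos[OF v(1)] by auto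
  have tpos: "\<forall>x\<in>set t. 2 \<le> x"
  proof
    fix x assume x: "x \<in> set t"
    then have "x \<noteq> 1" unfolding t_def by (auto dest: set_takeWhileD)
    moreover have "1 \<le> x" using vpos x vtd by auto
    ultimately show "2 \<le> x" by simp
  qed
  have r1t: "rgs (1 # t)" using rgs_prefix[of "1 # t" d] v(1) vtd by simp
  define u where "u = map (\<lambda>x. x - 1) t"
  have ru: "rgs u" unfolding u_def by (rule rgs_dec[OF r1t tpos])
  have ut: "map (\<lambda>x. x + 1) u = t" unfolding u_def using tpos by (induct t) auto
  define k where "k = nblocks u"
  have k: "k = mx u" unfolding k_def by (rule nblocks_rgs[OF ru])
  have mxt: "mx (1 # t) = k + 1"
  proof (cases "t = []")
    case True then show ?thesis using k by (simp add: u_def)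
  next
    case False
    then have "mx t \<in> set t" by (rule mx_in)
    then have "2 \<le> mx t" using tpos by auto
    then show ?thesis using k by (simp add: u_def mx_map_minus max_def)
  qed
  have dvals: "\<forall>y\<in>set d. y = 1 \<or> k + 2 \<le> y"
  proof (rule ballI, rule ccontr)
    fix y assume y: "y \<in> set d" and ny: "\<not> (y = 1 \<or> k + 2 \<le> y)"
    have "1 \<le> y" using vpos y vtd by auto
    then have "y \<in> {1..mx (1 # t)}" using mxt ny by simp
    then have "y \<in> set (1 # t)" using rgs_set[OF r1t] by blast
    then have yt: "y \<in> set t" using ny by auto
    have "d \<noteq> []" using y by auto
    then have "dropWhile (\<lambda>x. x \<noteq> 1) rest \<noteq> []" by (simp add: d_def)
    from hd_dropWhile[OF this] have "hd d = 1" by (simp add: d_def)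
    then obtain d' where dd: "d = 1 # d'" using \<open>d \<noteq> []\<close> by (cases d) auto
    then have "y \<in> set d'" using y ny by auto
    have "subseq [y] t" using yt by (simp add: subseq_singleton_left)
    moreover have "subseq [1, y] (1 # d')" using \<open>y \<in> set d'\<close> by (simp add: subseq_singleton_left)
    ultimately have "subseq ([y] @ [1, y]) (t @ 1 # d')" by (rule list_emb_append_mono)
    then have "subseq [1, y, 1, y] v" using vtd dd by simp
    moreover have "1 < y" using ny \<open>1 \<le> y\<close> by simp
    ultimately have "contains v ?q" unfolding contains_1212_iff by blast
    then show False using v(2) by (simp add: avoids_def)
  qed
  define g where "g y = (if y = 1 then 1 else y - k)" for y
  have dhd: "d = [] \<or> hd d = 1"
  proof (cases "d = []")
    case False
    then have "dropWhile (\<lambda>x. x \<noteq> 1) rest \<noteq> []" by (simp add: d_def)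
    from hd_dropWhile[OF this] show ?thesis by (simp add: d_def)
  qed simp
  have rw: "rgs (map g d0)" if "rgs ((1 # t) @ d0)" "\<forall>y\<in>set d0. y = 1 \<or> k + 2 \<le> y"
    "d0 = [] \<or> hd d0 = 1" for d0
    using that
  proof (induct d0 rule: rev_induct)
    case Nil then show ?case by simp
  next
    case (snoc y d0)
    have h: "rgs ((1 # t) @ d0)" "1 \<le> y" "y \<le> Suc (max (k + 1) (mx d0))"
      using snoc(2) rgs_snoc[of "(1 # t) @ d0" y] mxt by auto
    have hd0: "d0 = [] \<or> hd d0 = 1" using snoc(4) by (cases d0) auto
    have ih: "rgs (map g d0)" using snoc(1) h(1) snoc(3) hd0 by auto
    have vals: "\<forall>z\<in>set d0. z = 1 \<or> k + 2 \<le> z" using snoc(3) by auto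
    have "g y \<le> Suc (mx (map g d0))"
    proof (cases "y = 1")
      case True then show ?thesis by (simp add: g_def)
    next
      case yn: False
      then have yk: "k + 2 \<le> y" using snoc(3) by auto
      have d0ne: "d0 \<noteq> []" using snoc(4) yn by auto
      have mono: "\<forall>a\<in>set d0. \<forall>b\<in>set d0. a \<le> b \<longrightarrow> g a \<le> g b"
      proof (intro ballI impI)
        fix a b assume a: "a \<in> set d0" and b: "b \<in> set d0" and ab: "a \<le> b"
        show "g a \<le> g b"
        proof (cases "a = 1")
          case True then show ?thesis using vals b by (auto simp: g_def)
        next
          case False then have "k + 2 \<le> a" using vals a by auto
          then show ?thesis using ab by (auto simp: g_def)
        qed
      qed
      have mg: "mx (map g d0) = g (mx d0)" by (rule mx_map_mono[OF d0ne mono])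
      have "mx d0 \<in> set d0" using d0ne by (rule mx_in)
      then have "mx d0 = 1 \<or> k + 2 \<le> mx d0" using vals by auto
      then show ?thesis
      proof
        assume m1: "mx d0 = 1"
        then have "max (k + 1) (mx d0) = k + 1" by simp
        then have "y = k + 2" using h(3) yk by linarith
        then show ?thesis using mg m1 by (simp add: g_def)
      next
        assume m2: "k + 2 \<le> mx d0"
        then have "y \<le> Suc (mx d0)" using h(3) by (simp add: max_def)
        then show ?thesis using mg m2 yn by (simp add: g_def)
      qed
    qed
    moreover have "1 \<le> g y"
    proof (cases "y = 1")
      case False then have "k + 2 \<le> y" using snoc(3) by auto
      then show ?thesis by (simp add: g_def)
    qed (simp add: g_def)
    ultimately show ?case using ih by (simp add: rgs_snoc)
  qed
  define w where "w = map g d"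
  have rgw: "rgs w" unfolding w_def using v(1) vtd dvals dhd by (intro rw) simp_all
  have smg: "strict_mono_on (set d) g"
  proof (rule strict_mono_onI)
    fix a b assume a: "a \<in> set d" and b: "b \<in> set d" and ab: "a < b"
    show "g a < g b"
    proof (cases "a = 1")
      case True
      then have "k + 2 \<le> b" using dvals b ab by auto
      then show ?thesis using True by (simp add: g_def)
    next
      case False
      then have "k + 2 \<le> a" using dvals a by auto
      then show ?thesis using ab False by (simp add: g_def)
    qed
  qed
  have avu: "avoids u ?q"
  proof -
    have "subseq t (1 # (t @ d))" by (intro list_emb_Cons subseq_rev_drop_many subseq_order.order_refl)
    then have "subseq t v" using vtd by simp
    then have "\<not> contains t ?q" using v(2) contains_mono by (auto simp: avoids_def)
    then show ?thesis using contains_plus[of 1 u ?q] ut by (simp add: avoids_def)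
  qed
  have avw: "avoids w ?q"
  proof -
    have "subseq d ((1 # t) @ d)" by (intro subseq_drop_many subseq_order.order_refl)
    then have "subseq d v" using vtd by simp
    then have "\<not> contains d ?q" using v(2) contains_mono by (auto simp: avoids_def)
    then show ?thesis unfolding w_def avoids_def using contains_map[OF smg] by simp
  qed
  have "fE k (g y) = y" if "y \<in> set d" for y
  proof (cases "y = 1")
    case True then show ?thesis by (simp add: g_def fE_def)
  next
    case False then have "k + 2 \<le> y" using dvals that by auto
    then show ?thesis using False by (simp add: g_def fE_def)
  qed
  then have "map (fE k) w = d" unfolding w_def by (induct d) auto
  then have "E u w = v" unfolding E_def using ut vtd k_def by simp
  then show ?thesis using ru rgw avu avw by blast
qed



definition ncw :: "nat list \<Rightarrow> bool" where "ncw w \<longleftrightarrow> rgs w \<and> avoids w [1,2,1,2]"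

definition cnt :: "(nat list \<Rightarrow> bool) \<Rightarrow> nat \<Rightarrow> nat" where
  "cnt Q n = card {w. ncw w \<and> length w = n \<and> Q w}"

definition pc :: "(nat list \<Rightarrow> bool) \<Rightarrow> (nat list \<Rightarrow> bool) \<Rightarrow> nat \<Rightarrow> nat" where
  "pc Q1 Q2 n = card {(u, w). ncw u \<and> ncw w \<and> length u + length w = n \<and> Q1 u \<and> Q2 w}"

lemma ncw_set: "ncw w \<Longrightarrow> set w \<subseteq> {0..length w}"
proof -
  assume "ncw w"
  then have r: "rgs w" by (simp add: ncw_def)
  have "nblocks w \<le> length w" unfolding nblocks_def by (rule card_length)
  then show "set w \<subseteq> {0..length w}" using rgs_le_nblocks[OF r] by fastforce
qed

lemma finite_rgs_len: "finite {w. ncw w \<and> length w = n \<and> Q w}"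
proof (rule finite_subset)
  show "{w. ncw w \<and> length w = n \<and> Q w} \<subseteq> {w. set w \<subseteq> {0..n} \<and> length w = n}"
    using ncw_set by auto
  show "finite {w. set w \<subseteq> {0..n} \<and> length w = n}"
    by (rule finite_lists_length_eq) simp
qed

lemma finite_rgs_len': "finite {w. ncw w \<and> length w = n}"
  using finite_rgs_len[of n "\<lambda>_. True"] by simp

lemma pc_sum: "pc Q1 Q2 n = (\<Sum>k\<le>n. cnt Q1 k * cnt Q2 (n - k))"
proof -
  have eq: "{(u, w). ncw u \<and> ncw w \<and> length u + length w = n \<and> Q1 u \<and> Q2 w}
     = (\<Union>k\<in>{..n}. {u. ncw u \<and> length u = k \<and> Q1 u} \<times> {w. ncw w \<and> length w = n - k \<and> Q2 w})"
    by auto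
  have "card (\<Union>k\<in>{..n}. {u. ncw u \<and> length u = k \<and> Q1 u} \<times> {w. ncw w \<and> length w = n - k \<and> Q2 w})
     = (\<Sum>k\<le>n. card ({u. ncw u \<and> length u = k \<and> Q1 u} \<times> {w. ncw w \<and> length w = n - k \<and> Q2 w}))"
    by (rule card_UN_disjoint) (auto simp: finite_rgs_len)
  also have "\<dots> = (\<Sum>k\<le>n. cnt Q1 k * cnt Q2 (n - k))"
    by (simp add: card_cartesian_product cnt_def)
  finally show ?thesis unfolding pc_def eq .
qed

lemma finite_pairs: "finite {(u, w). ncw u \<and> ncw w \<and> length u + length w = n \<and> Q u w}"
proof (rule finite_subset)
  show "{(u, w). ncw u \<and> ncw w \<and> length u + length w = n \<and> Q u w} \<subseteq>
     (\<Union>k\<in>{..n}. {u. ncw u \<and> length u = k \<and> True} \<times> {w. ncw w \<and> length w = n - k \<and> True})"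
    by auto
  show "finite (\<Union>k\<in>{..n}. {u. ncw u \<and> length u = k \<and> True} \<times> {w. ncw w \<and> length w = n - k \<and> True})"
    using finite_rgs_len' by auto
qed

lemma pair_split:
  assumes "\<And>u w. ncw u \<Longrightarrow> ncw w \<Longrightarrow> Q u w \<longleftrightarrow> (Q1 u \<and> Q2 w) \<or> Q' u w"
    and "\<And>u w. ncw u \<Longrightarrow> ncw w \<Longrightarrow> Q1 u \<and> Q2 w \<Longrightarrow> \<not> Q' u w"
  shows "card {(u, w). ncw u \<and> ncw w \<and> length u + length w = n \<and> Q u w} =
     pc Q1 Q2 n + card {(u, w). ncw u \<and> ncw w \<and> length u + length w = n \<and> Q' u w}"
proof -
  have "{(u, w). ncw u \<and> ncw w \<and> length u + length w = n \<and> Q u w} =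
     {(u, w). ncw u \<and> ncw w \<and> length u + length w = n \<and> Q1 u \<and> Q2 w} \<union>
     {(u, w). ncw u \<and> ncw w \<and> length u + length w = n \<and> Q' u w}"
    using assms(1) by auto
  moreover have "card (\<dots>) = pc Q1 Q2 n + card {(u, w). ncw u \<and> ncw w \<and> length u + length w = n \<and> Q' u w}"
    unfolding pc_def
    by (rule card_Un_disjoint) (use finite_pairs[of n "\<lambda>u w. Q1 u \<and> Q2 w"] finite_pairs assms(2) in auto)
  ultimately show ?thesis by simp
qed

lemma pair_last:
  "card {(u, w). ncw u \<and> ncw w \<and> length u + length w = n \<and> Q1 u \<and> Q2 w} = pc Q1 Q2 n"
  by (simp add: pc_def)

lemma card_E:
  "card {v. ncw v \<and> length v = Suc n \<and> Q v} =
   card {(u, w). ncw u \<and> ncw w \<and> length u + length w = n \<and> Q (E u w)}"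
proof -
  let ?A = "{(u, w). ncw u \<and> ncw w \<and> length u + length w = n \<and> Q (E u w)}"
  have inj: "inj_on (\<lambda>(u, w). E u w) ?A"
    by (rule inj_onI) (auto simp: ncw_def dest: E_inj)
  have img: "(\<lambda>(u, w). E u w) ` ?A = {v. ncw v \<and> length v = Suc n \<and> Q v}"
  proof
    show "(\<lambda>(u, w). E u w) ` ?A \<subseteq> {v. ncw v \<and> length v = Suc n \<and> Q v}"
    proof
      fix v assume "v \<in> (\<lambda>(u, w). E u w) ` ?A"
      then obtain u w where uw: "ncw u" "ncw w" "length u + length w = n" "Q (E u w)" "v = E u w"
        by auto
      have "rgs (E u w)" using uw rgs_E by (simp add: ncw_def)
      moreover have "avoids (E u w) [1,2,1,2]"
        using uw(1,2) unfolding ncw_def by (intro ncE) auto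
      ultimately show "v \<in> {v. ncw v \<and> length v = Suc n \<and> Q v}" using uw by (simp add: ncw_def)
    qed
    show "{v. ncw v \<and> length v = Suc n \<and> Q v} \<subseteq> (\<lambda>(u, w). E u w) ` ?A"
    proof
      fix v assume v: "v \<in> {v. ncw v \<and> length v = Suc n \<and> Q v}"
      then have "v \<noteq> []" by auto
      moreover have "rgs v" "avoids v [1,2,1,2]" using v by (auto simp: ncw_def)
      ultimately obtain u w where uw: "rgs u" "avoids u [1,2,1,2]" "rgs w" "avoids w [1,2,1,2]" "v = E u w"
        using decomp by blast
      then have "(u, w) \<in> ?A" using v by (auto simp: ncw_def)
      then show "v \<in> (\<lambda>(u, w). E u w) ` ?A" using uw(5) by force
    qed
  qed
  show ?thesis using card_image[OF inj] img by simp
qed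

lemma cnt_Nil: "cnt (\<lambda>w. w = []) m = (if m = 0 then 1 else 0)"
proof -
  have "{w. ncw w \<and> length w = m \<and> w = []} = (if m = 0 then {[]} else {})"
    by (auto simp: ncw_def avoids_def contains_def order_iso_def)
  then show ?thesis by (simp add: cnt_def)
qed

lemma sum_delta_Nil: "(\<Sum>k\<le>n. f k * cnt (\<lambda>w. w = []) (n - k)) = f n"
proof -
  have "(\<Sum>k\<le>n. f k * cnt (\<lambda>w. w = []) (n - k)) = (\<Sum>k\<le>n. if k = n then f k else 0)"
    by (rule sum.cong) (auto simp: cnt_Nil)
  then show ?thesis by simp
qed

lemma cnt_split:
  assumes "\<And>w. ncw w \<Longrightarrow> Q w \<longleftrightarrow> Q1 w \<or> Q2 w" "\<And>w. ncw w \<Longrightarrow> Q1 w \<Longrightarrow> \<not> Q2 w"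
  shows "cnt Q n = cnt Q1 n + cnt Q2 n"
proof -
  have "{w. ncw w \<and> length w = n \<and> Q w} = {w. ncw w \<and> length w = n \<and> Q1 w} \<union> {w. ncw w \<and> length w = n \<and> Q2 w}"
    using assms(1) by auto
  then show ?thesis unfolding cnt_def
    by (simp only:) (rule card_Un_disjoint, auto simp: finite_rgs_len dest: assms(2))
qed

lemma cnt_cong: "(\<And>w. ncw w \<Longrightarrow> Q w \<longleftrightarrow> Q' w) \<Longrightarrow> cnt Q n = cnt Q' n"
  unfolding cnt_def by (rule arg_cong[where f = card]) auto



definition good :: "nat list \<Rightarrow> bool" where
  "good \<sigma> \<longleftrightarrow> rgs \<sigma> \<and> avoids \<sigma> [1,2,1,2] \<and> (\<sigma> = [] \<or> connected_part \<sigma>)"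

lemma notS_notP: "rgs \<sigma> \<Longrightarrow> \<not> contains u \<sigma> \<Longrightarrow> \<not> contains u (one_br_one_br \<sigma> \<tau>)"
  using contains_trans contains_p_sigma by blast

lemma notT_notP: "\<not> contains u \<tau> \<Longrightarrow> \<not> contains u (one_br_one_br \<sigma> \<tau>)"
  using contains_trans contains_p_tau by blast

lemma ncw_rgs: "ncw w \<Longrightarrow> rgs w" by (simp add: ncw_def)

lemma v_rec:
  assumes gs: "good \<sigma>" and gt: "good \<tau>"
  shows "cnt (\<lambda>w. \<not> contains w (one_br_one_br \<sigma> \<tau>)) (Suc n) =
    cnt (\<lambda>w. \<not> contains w (one_br_one_br \<sigma> \<tau>)) n +
    (\<Sum>k\<le>n. cnt (\<lambda>w. \<not> contains w \<sigma>) k * cnt (\<lambda>w. w \<noteq> [] \<and> \<not> contains w (one_br_one_br \<sigma> \<tau>)) (n - k)) +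
    (\<Sum>k\<le>n. cnt (\<lambda>w. contains w \<sigma> \<and> \<not> contains w (one_br_one_br \<sigma> \<tau>)) k *
       cnt (\<lambda>w. w \<noteq> [] \<and> \<not> contains w (one_br_one_br \<sigma> \<tau>) \<and> \<not> contains (R w) \<tau>) (n - k))"
proof -
  let ?p = "one_br_one_br \<sigma> \<tau>"
  have s: "rgs \<sigma>" "avoids \<sigma> [1,2,1,2]" "\<sigma> = [] \<or> connected_part \<sigma>" using gs by (auto simp: good_def)
  have t: "rgs \<tau>" "\<tau> = [] \<or> connected_part \<tau>" using gt by (auto simp: good_def)
  have key: "\<not> contains (E u w) ?p \<longleftrightarrow>
      (\<not> contains u ?p \<and> w = []) \<or>
      ((\<not> contains u \<sigma> \<and> (w \<noteq> [] \<and> \<not> contains w ?p)) \<or>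
       ((contains u \<sigma> \<and> \<not> contains u ?p) \<and> (w \<noteq> [] \<and> \<not> contains w ?p \<and> \<not> contains (R w) \<tau>)))"
    if "ncw u" "ncw w" for u w
  proof (cases "w = []")
    case True then show ?thesis using KP0[OF s(1) t(1) ncw_rgs[OF that(1)]] by simp
  next
    case False
    then show ?thesis using KP[OF s t ncw_rgs[OF that(1)] ncw_rgs[OF that(2)] False]
      notS_notP[OF s(1), of u \<tau>] by blast
  qed
  have "cnt (\<lambda>w. \<not> contains w ?p) (Suc n) =
     card {(u, w). ncw u \<and> ncw w \<and> length u + length w = n \<and> \<not> contains (E u w) ?p}"
    unfolding cnt_def by (rule card_E)
  also have "\<dots> = pc (\<lambda>u. \<not> contains u ?p) (\<lambda>w. w = []) n +
     card {(u, w). ncw u \<and> ncw w \<and> length u + length w = n \<and>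
      ((\<not> contains u \<sigma> \<and> (w \<noteq> [] \<and> \<not> contains w ?p)) \<or>
       ((contains u \<sigma> \<and> \<not> contains u ?p) \<and> (w \<noteq> [] \<and> \<not> contains w ?p \<and> \<not> contains (R w) \<tau>)))}"
    by (rule pair_split) (use key in auto)
  also have "card {(u, w). ncw u \<and> ncw w \<and> length u + length w = n \<and>
      ((\<not> contains u \<sigma> \<and> (w \<noteq> [] \<and> \<not> contains w ?p)) \<or>
       ((contains u \<sigma> \<and> \<not> contains u ?p) \<and> (w \<noteq> [] \<and> \<not> contains w ?p \<and> \<not> contains (R w) \<tau>)))}
     = pc (\<lambda>u. \<not> contains u \<sigma>) (\<lambda>w. w \<noteq> [] \<and> \<not> contains w ?p) n +
       card {(u, w). ncw u \<and> ncw w \<and> length u + length w = n \<and>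
       ((contains u \<sigma> \<and> \<not> contains u ?p) \<and> (w \<noteq> [] \<and> \<not> contains w ?p \<and> \<not> contains (R w) \<tau>))}"
    by (rule pair_split) auto
  also have "card {(u, w). ncw u \<and> ncw w \<and> length u + length w = n \<and>
       ((contains u \<sigma> \<and> \<not> contains u ?p) \<and> (w \<noteq> [] \<and> \<not> contains w ?p \<and> \<not> contains (R w) \<tau>))}
     = pc (\<lambda>u. contains u \<sigma> \<and> \<not> contains u ?p) (\<lambda>w. w \<noteq> [] \<and> \<not> contains w ?p \<and> \<not> contains (R w) \<tau>) n"
    by (rule pair_last)
  finally show ?thesis by (simp only: pc_sum sum_delta_Nil)
qed

lemma om_rec:
  assumes gs: "good \<sigma>" and gt: "good \<tau>"
  shows "cnt (\<lambda>w. w \<noteq> [] \<and> \<not> contains w (one_br_one_br \<sigma> \<tau>) \<and> \<not> contains (R w) \<tau>) (Suc n) =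
    cnt (\<lambda>w. \<not> contains w \<tau>) n +
    (\<Sum>k\<le>n. cnt (\<lambda>w. \<not> contains w \<tau>) k *
       cnt (\<lambda>w. w \<noteq> [] \<and> \<not> contains w (one_br_one_br \<sigma> \<tau>) \<and> \<not> contains (R w) \<tau>) (n - k))"
proof -
  let ?p = "one_br_one_br \<sigma> \<tau>"
  have s: "rgs \<sigma>" "avoids \<sigma> [1,2,1,2]" "\<sigma> = [] \<or> connected_part \<sigma>" using gs by (auto simp: good_def)
  have t: "rgs \<tau>" "\<tau> = [] \<or> connected_part \<tau>" using gt by (auto simp: good_def)
  have key: "(E u w \<noteq> [] \<and> \<not> contains (E u w) ?p \<and> \<not> contains (R (E u w)) \<tau>) \<longleftrightarrow>
      (\<not> contains u \<tau> \<and> w = []) \<or>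
      (\<not> contains u \<tau> \<and> (w \<noteq> [] \<and> \<not> contains w ?p \<and> \<not> contains (R w) \<tau>))"
    if "ncw u" "ncw w" for u w
  proof -
    have ru: "rgs u" and rw: "rgs w" using that by (auto simp: ncw_def)
    have upos: "\<forall>x\<in>set u. 1 \<le> x" using rgs_pos[OF ru] by auto
    have wpos: "\<forall>x\<in>set w. 1 \<le> x" using rgs_pos[OF rw] by auto
    have ne: "E u w \<noteq> []" by (simp add: E_def)
    show ?thesis
    proof (cases "w = []")
      case True
      then show ?thesis using KP0[OF s(1) t(1) ru] R_E_Nil[OF upos] ne notT_notP[of u \<tau> \<sigma>] by auto
    next
      case False
      have RE: "R (E u w) = bconcat u (R w)" by (rule R_E[OF wpos upos])
      have cb: "contains (bconcat u (R w)) \<tau> \<longleftrightarrow> contains u \<tau> \<or> contains (R w) \<tau>"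
        by (rule contains_bconcat[OF ru _ t]) (use R_pos[OF wpos] in blast)
      show ?thesis unfolding RE using KP[OF s t ru rw False] cb ne False notT_notP[of u \<tau> \<sigma>] by blast
    qed
  qed
  have "cnt (\<lambda>w. w \<noteq> [] \<and> \<not> contains w ?p \<and> \<not> contains (R w) \<tau>) (Suc n) =
     card {(u, w). ncw u \<and> ncw w \<and> length u + length w = n \<and>
       (E u w \<noteq> [] \<and> \<not> contains (E u w) ?p \<and> \<not> contains (R (E u w)) \<tau>)}"
    unfolding cnt_def by (rule card_E)
  also have "\<dots> = pc (\<lambda>u. \<not> contains u \<tau>) (\<lambda>w. w = []) n +
     card {(u, w). ncw u \<and> ncw w \<and> length u + length w = n \<and>
      (\<not> contains u \<tau> \<and> (w \<noteq> [] \<and> \<not> contains w ?p \<and> \<not> contains (R w) \<tau>))}"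
    by (rule pair_split) (use key in auto)
  also have "card {(u, w). ncw u \<and> ncw w \<and> length u + length w = n \<and>
      (\<not> contains u \<tau> \<and> (w \<noteq> [] \<and> \<not> contains w ?p \<and> \<not> contains (R w) \<tau>))} =
     pc (\<lambda>u. \<not> contains u \<tau>) (\<lambda>w. w \<noteq> [] \<and> \<not> contains w ?p \<and> \<not> contains (R w) \<tau>) n"
    by (rule pair_last)
  finally show ?thesis by (simp only: pc_sum sum_delta_Nil)
qed

lemma cnt_ne: "cnt (\<lambda>w. w \<noteq> [] \<and> Q w) m = (if m = 0 then 0 else cnt Q m)"
proof (cases "m = 0")
  case True
  then have "{w. ncw w \<and> length w = m \<and> w \<noteq> [] \<and> Q w} = {}" by auto
  then show ?thesis using True by (simp add: cnt_def)
next
  case False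
  then have "{w. ncw w \<and> length w = m \<and> w \<noteq> [] \<and> Q w} = {w. ncw w \<and> length w = m \<and> Q w}" by auto
  then show ?thesis using False by (simp add: cnt_def)
qed

lemma cnt0: "cnt (\<lambda>w. \<not> contains w (one_br_one_br \<sigma> \<tau>)) 0 = 1"
proof -
  have "{w. ncw w \<and> length w = 0 \<and> \<not> contains w (one_br_one_br \<sigma> \<tau>)} = {[]}"
    by (auto simp: ncw_def avoids_def contains_def order_iso_def p_eq)
  then show ?thesis by (simp add: cnt_def)
qed

lemma cnt_P_split:
  assumes "rgs \<sigma>"
  shows "cnt (\<lambda>w. \<not> contains w (one_br_one_br \<sigma> \<tau>)) m =
    cnt (\<lambda>w. \<not> contains w \<sigma>) m + cnt (\<lambda>w. contains w \<sigma> \<and> \<not> contains w (one_br_one_br \<sigma> \<tau>)) m"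
  by (rule cnt_split) (use notS_notP[OF assms] in auto)





definition AA :: "nat list \<Rightarrow> int fps" where
  "AA x = Abs_fps (\<lambda>n. int (cnt (\<lambda>w. \<not> contains w x) n))"

definition VV :: "nat list \<Rightarrow> nat list \<Rightarrow> int fps" where
  "VV s t = Abs_fps (\<lambda>n. int (cnt (\<lambda>w. \<not> contains w (one_br_one_br s t)) n))"

lemma gf_eq:
  assumes gs: "good \<sigma>" and gt: "good \<tau>"
  shows "VV \<sigma> \<tau> * (1 - fps_X - fps_X * AA \<sigma> - fps_X * AA \<tau> + fps_X^2 * AA \<sigma> * AA \<tau>)
       = 1 - fps_X * AA \<sigma> - fps_X * AA \<tau>"
proof -
  let ?p = "one_br_one_br \<sigma> \<tau>"
  define v where "v n = cnt (\<lambda>w. \<not> contains w ?p) n" for n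
  define a where "a n = cnt (\<lambda>w. \<not> contains w \<sigma>) n" for n
  define b where "b n = cnt (\<lambda>w. \<not> contains w \<tau>) n" for n
  define sp where "sp n = cnt (\<lambda>w. contains w \<sigma> \<and> \<not> contains w ?p) n" for n
  define om where "om n = cnt (\<lambda>w. w \<noteq> [] \<and> \<not> contains w ?p \<and> \<not> contains (R w) \<tau>) n" for n
  have rs: "rgs \<sigma>" using gs by (simp add: good_def)
  have F1: "v (Suc n) = v n + (\<Sum>k\<le>n. a k * (if n - k = 0 then 0 else v (n - k))) + (\<Sum>k\<le>n. sp k * om (n - k))" for n
    using v_rec[OF gs gt, of n] cnt_ne[of "\<lambda>w. \<not> contains w ?p"]
    unfolding v_def a_def sp_def om_def by simp
  have F2: "om (Suc n) = b n + (\<Sum>k\<le>n. b k * om (n - k))" for n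
    using om_rec[OF gs gt, of n] unfolding om_def b_def by simp
  have F3: "v k = a k + sp k" for k unfolding v_def a_def sp_def by (rule cnt_P_split[OF rs])
  have v0: "v 0 = 1" unfolding v_def by (rule cnt0)
  have om0: "om 0 = 0" unfolding om_def using cnt_ne[of "\<lambda>w. \<not> contains w ?p \<and> \<not> contains (R w) \<tau>" 0] by simp
  define V where "V = Abs_fps (\<lambda>n. int (v n))"
  define A where "A = Abs_fps (\<lambda>n. int (a n))"
  define B where "B = Abs_fps (\<lambda>n. int (b n))"
  define W where "W = Abs_fps (\<lambda>n. int (om n))"
  have VV: "VV \<sigma> \<tau> = V" unfolding V_def VV_def v_def ..
  have AS: "AA \<sigma> = A" unfolding A_def AA_def a_def ..
  have AT: "AA \<tau> = B" unfolding B_def AA_def b_def ..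
  let ?X = "fps_X :: int fps"
  have E1: "V = 1 + ?X * V + ?X * (A * (V - 1) + (V - A) * W)"
  proof (rule fps_ext)
    fix n show "V $ n = (1 + ?X * V + ?X * (A * (V - 1) + (V - A) * W)) $ n"
    proof (cases n)
      case 0 then show ?thesis using v0 by (simp add: V_def)
    next
      case (Suc m)
      have s1: "(A * (V - 1)) $ m = (\<Sum>k\<le>m. int (a k * (if m - k = 0 then 0 else v (m - k))))"
        unfolding fps_mult_nth atMost_atLeast0
        by (rule sum.cong) (auto simp: A_def V_def v0)
      have s2: "((V - A) * W) $ m = (\<Sum>k\<le>m. int (sp k * om (m - k)))"
        unfolding fps_mult_nth atMost_atLeast0
        by (rule sum.cong) (auto simp: A_def V_def W_def F3)
      have "int (v (Suc m)) = int (v m) + (\<Sum>k\<le>m. int (a k * (if m - k = 0 then 0 else v (m - k))))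
          + (\<Sum>k\<le>m. int (sp k * om (m - k)))"
        unfolding F1[of m] by (simp only: of_nat_add of_nat_sum)
      then show ?thesis using Suc s1 s2 by (simp add: V_def)
    qed
  qed
  have E2: "W = ?X * B + ?X * B * W"
  proof (rule fps_ext)
    fix n show "W $ n = (?X * B + ?X * B * W) $ n"
    proof (cases n)
      case 0 then show ?thesis using om0 by (simp add: W_def)
    next
      case (Suc m)
      have s1: "(B * W) $ m = (\<Sum>k\<le>m. int (b k * om (m - k)))"
        unfolding fps_mult_nth atMost_atLeast0
        by (rule sum.cong) (auto simp: B_def W_def)
      have "int (om (Suc m)) = int (b m) + (\<Sum>k\<le>m. int (b k * om (m - k)))"
        unfolding F2[of m] by (simp only: of_nat_add of_nat_sum)
      then show ?thesis using Suc s1 by (simp add: W_def B_def mult.assoc)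
    qed
  qed
  have id: "V * (1 - ?X - ?X * A - ?X * B + ?X^2 * A * B) - (1 - ?X * A - ?X * B)
     = (1 - ?X * B) * (V - (1 + ?X * V + ?X * (A * (V - 1) + (V - A) * W)))
       + (?X * V - ?X * A) * (W - (?X * B + ?X * B * W))"
    by (simp add: algebra_simps power2_eq_square)
  have "V * (1 - ?X - ?X * A - ?X * B + ?X^2 * A * B) - (1 - ?X * A - ?X * B) = 0"
    unfolding id using E1 E2 by simp
  then show ?thesis unfolding VV AS AT by simp
qed





lemma nc_count_cnt: "nc_count p n = cnt (\<lambda>w. \<not> contains w p) n"
  unfolding nc_count_def cnt_def ncw_def avoids_def
  by (rule arg_cong[where f = card]) auto

theorem theorem3p7:
  fixes \<sigma> \<tau> :: "nat list"
  assumes "rgs \<sigma>" and "noncrossing \<sigma>" and "\<sigma> = [] \<or> connected_part \<sigma>"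
      and "rgs \<tau>" and "noncrossing \<tau>" and "\<tau> = [] \<or> connected_part \<tau>"
  shows "\<forall>n. nc_count (one_br_one_br \<sigma> \<tau>) n = nc_count (one_br_one_br \<tau> \<sigma>) n"
proof
  fix n
  have gs: "good \<sigma>" using assms(1-3) by (simp add: good_def noncrossing_def)
  have gt: "good \<tau>" using assms(4-6) by (simp add: good_def noncrossing_def)
  let ?X = "fps_X :: int fps"
  define Q where "Q = 1 - ?X - ?X * AA \<sigma> - ?X * AA \<tau> + ?X^2 * AA \<sigma> * AA \<tau>"
  define Rr where "Rr = 1 - ?X * AA \<sigma> - ?X * AA \<tau>"
  have e1: "VV \<sigma> \<tau> * Q = Rr" unfolding Q_def Rr_def by (rule gf_eq[OF gs gt])
  have "VV \<tau> \<sigma> * (1 - ?X - ?X * AA \<tau> - ?X * AA \<sigma> + ?X^2 * AA \<tau> * AA \<sigma>)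
       = 1 - ?X * AA \<tau> - ?X * AA \<sigma>" by (rule gf_eq[OF gt gs])
  moreover have "1 - ?X - ?X * AA \<tau> - ?X * AA \<sigma> + ?X^2 * AA \<tau> * AA \<sigma> = Q"
    unfolding Q_def by (simp add: algebra_simps)
  moreover have "1 - ?X * AA \<tau> - ?X * AA \<sigma> = Rr" unfolding Rr_def by (simp add: algebra_simps)
  ultimately have e2: "VV \<tau> \<sigma> * Q = Rr" by simp
  have "(VV \<sigma> \<tau> - VV \<tau> \<sigma>) * Q = 0" using e1 e2 by (simp add: algebra_simps)
  moreover have "Q \<noteq> 0"
  proof
    assume "Q = 0"
    then have "Q $ 0 = 0" by simp
    moreover have "Q $ 0 = 1" unfolding Q_def by simp
    ultimately show False by simp
  qed
  ultimately have "VV \<sigma> \<tau> = VV \<tau> \<sigma>" by simp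
  then have "VV \<sigma> \<tau> $ n = VV \<tau> \<sigma> $ n" by simp
  then show "nc_count (one_br_one_br \<sigma> \<tau>) n = nc_count (one_br_one_br \<tau> \<sigma>) n"
    by (simp add: VV_def nc_count_cnt)
qed


end
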